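(* Let the setting and the algorithm RandProx-CP be as in the context. Suppose that $\mu_g>0$ and $\mu_{h^*}>0$, and that $\gamma>0$, $\tau>0$, $\gamma\tau\big((1-\zeta)\|K\|^2+\omega_{\mathrm{ran}}\big)\le1$. For $t\ge0$ let $\Psi^t:=\frac{1}{\gamma}\|x^t-x^\star\|^2+(1+\omega)\big(\frac{1}{\tau}+2\mu_{h^*}\big)\|u^t-u^\star\|^2$, where $x^\star,u^\star$ are the unique primal and dual solutions. Then for every $t\ge0$, $\mathbb{E}[\Psi^t]\le c^t\Psi^0$, where $$c:=\max\left(\frac{1}{1+\gamma\mu_g},\ 1-\frac{2\tau\mu_{h^*}}{(1+\omega)(1+2\tau\mu_{h^*})}\right)=1-\min\left(\frac{\gamma\mu_g}{1+\gamma\mu_g},\ \frac{2\tau\mu_{h^*}}{(1+\omega)(1+2\tau\mu_{h^*})}\right)<1.$$ Moreover, $(x^t)$ and $(\hat{x}^t)$ both converge to $x^\star$ and $(u^t)$ converges to $u^\star$, almost surely.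
   Context: $\mathcal{X},\mathcal{U}$ finite-dimensional real Hilbert spaces, $K:\mathcal{X}\to\mathcal{U}$ a nonzero linear operator with adjoint $K^*$. $g:\mathcal{X}\to\mathbb{R}\cup\{+\infty\}$, $h:\mathcal{U}\to\mathbb{R}\cup\{+\infty\}$ proper closed convex; $g$ is $\mu_g$-strongly convex and the conjugate $h^*$ is $\mu_{h^*}$-strongly convex (a convex $\phi$ is $\mu$-strongly convex if $\phi-\frac{\mu}{2}\|\cdot\|^2$ is convex). $\mathrm{prox}_{\gamma\phi}(x):=\arg\min_{x'}(\gamma\phi(x')+\frac12\|x'-x\|^2)$. Primal problem: minimize $g(x)+h(Kx)$; dual: minimize $g^*(-K^*u)+h^*(u)$. It is assumed there exists $(x^\star,u^\star)$ with $0\in\partial g(x^\star)+K^*u^\star$, $0\in-Kx^\star+\partial h^*(u^\star)$. Algorithm RandProx-CP: inputs $x^0\in\mathcal{X}$, $u^0\in\mathcal{U}$, $\gamma>0,\tau>0,\omega\ge0$; $\hat{x}^0:=\mathrm{prox}_{\gamma g}(x^0-\gamma K^*u^0)$; for $t\ge0$: $d^t:=\mathcal{R}^t\big(\mathrm{prox}_{\tau h^*}(u^t+\tau K\hat{x}^t)-u^t\big)$; $u^{t+1}:=u^t+\frac{1}{1+\omega}d^t$; $x^{t+1}:=\hat{x}^t-\gamma K^*d^t$; $\hat{x}^{t+1}:=\mathrm{prox}_{\gamma g}\big(\hat{x}^t-\gamma K^*(u^{t+1}+d^t)\big)$ (equivalently $\hat{x}^{t+1}=\mathrm{prox}_{\gamma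 g}(x^{t+1}-\gamma K^*u^{t+1})$). With $\mathcal{F}_t$ the $\sigma$-algebra generated by $(x^0,u^0),\dots,(x^t,u^t)$ and $r^t:=\mathrm{prox}_{\tau h^*}(u^t+\tau K\hat{x}^t)-u^t$, the random estimate $\mathcal{R}^t(r^t)$ satisfies $\mathbb{E}[\mathcal{R}^t(r^t)\mid\mathcal{F}_t]=r^t$, $\mathbb{E}[\|\mathcal{R}^t(r^t)-r^t\|^2\mid\mathcal{F}_t]\le\omega\|r^t\|^2$, $\mathbb{E}[\|K^*(\mathcal{R}^t(r^t)-r^t)\|^2\mid\mathcal{F}_t]\le\omega_{\mathrm{ran}}\|r^t\|^2-\zeta\|K^*r^t\|^2$, for constants $\omega_{\mathrm{ran}}\ge0$, $\zeta\in[0,1]$. *)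

theory Defs
  imports "HOL-Analysis.Analysis" "HOL-Probability.Probability"
begin

definition proper_fun :: "('a \<Rightarrow> ereal) \<Rightarrow> bool" where
  "proper_fun \<phi> \<longleftrightarrow> (\<forall>x. \<phi> x \<noteq> -\<infinity>) \<and> (\<exists>x. \<phi> x \<noteq> \<infinity>)"

text \<open>closed = lower semicontinuous = closed epigraph\<close>
definition closed_fun :: "('a::topological_space \<Rightarrow> ereal) \<Rightarrow> bool" where
  "closed_fun \<phi> \<longleftrightarrow> closed {(x, s::real). \<phi> x \<le> ereal s}"

definition convex_fun :: "('a::real_vector \<Rightarrow> ereal) \<Rightarrow> bool" where
  "convex_fun \<phi> \<longleftrightarrow> (\<forall>x y l. 0 < l \<and> l < 1 \<longrightarrow>
      \<phi> ((1 - l) *\<^sub>R x + l *\<^sub>R y) \<le> ereal (1 - l) * \<phi> x + ereal l * \<phi> y)"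

definition strongly_convex :: "real \<Rightarrow> ('a::real_normed_vector \<Rightarrow> ereal) \<Rightarrow> bool" where
  "strongly_convex \<mu> \<phi> \<longleftrightarrow> convex_fun (\<lambda>x. \<phi> x - ereal (\<mu> / 2 * (norm x)\<^sup>2))"

definition conj_fun :: "('a::real_inner \<Rightarrow> ereal) \<Rightarrow> 'a \<Rightarrow> ereal" where
  "conj_fun \<phi> u = (SUP x. ereal (inner u x) - \<phi> x)"

text \<open>Subdifferential (empty outside the domain)\<close>
definition subdiff :: "('a::real_inner \<Rightarrow> ereal) \<Rightarrow> 'a \<Rightarrow> 'a set" where
  "subdiff \<phi> x = {v. \<bar>\<phi> x\<bar> \<noteq> \<infinity> \<and> (\<forall>y. \<phi> x + ereal (inner v (y - x)) \<le> \<phi> y)}"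

definition prox :: "real \<Rightarrow> ('a::real_normed_vector \<Rightarrow> ereal) \<Rightarrow> 'a \<Rightarrow> 'a" where
  "prox \<gamma> \<phi> x = (THE p. \<forall>y. ereal \<gamma> * \<phi> p + ereal ((norm (p - x))\<^sup>2 / 2)
                              \<le> ereal \<gamma> * \<phi> y + ereal ((norm (y - x))\<^sup>2 / 2))"

definition gen_filtration :: "'w measure \<Rightarrow> (nat \<Rightarrow> 'w \<Rightarrow> 'x::topological_space)
    \<Rightarrow> (nat \<Rightarrow> 'w \<Rightarrow> 'u::topological_space) \<Rightarrow> nat \<Rightarrow> 'w measure" where
  "gen_filtration M x u t = sigma (space M)
     ((\<Union>s\<le>t. {x s -` A \<inter> space M | A. A \<in> sets borel})
      \<union> (\<Union>s\<le>t. {u s -` B \<inter> space M | B. B \<in> sets borel}))"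

end

theory Submission
  imports Defs
begin

lemma norm_comb_sq:
  fixes x y :: "'a::real_inner"
  shows "(norm ((1-l) *\<^sub>R x + l *\<^sub>R y))\<^sup>2 = (1-l)*(norm x)\<^sup>2 + l*(norm y)\<^sup>2 - l*(1-l)*(norm (x-y))\<^sup>2"
  by (simp add: power2_norm_eq_inner inner_add_left inner_add_right inner_diff_left inner_diff_right inner_commute algebra_simps)

lemma r1: fixes c a b m l X Y N :: real
  assumes "c - m*((1-l)*X + l*Y - l*(1-l)*N) \<le> (1-l)*(a - m*X) + l*(b - m*Y)"
  shows "c \<le> (1-l)*a + l*b - m*l*(1-l)*N"
proof -
  have "(1-l)*a + l*b - m*l*(1-l)*N - c = ((1-l)*(a - m*X) + l*(b - m*Y)) - (c - m*((1-l)*X + l*Y - l*(1-l)*N))"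
    by (simp add: algebra_simps)
  with assms show ?thesis by linarith
qed

lemma r2: fixes m l N :: real shows "m*(1-l)*N = m*N - l*(m*N)"
  by (simp add: algebra_simps)

lemma sc_real:
  fixes \<phi> :: "'a::real_inner \<Rightarrow> ereal"
  assumes sc: "strongly_convex \<mu> \<phi>" and fx: "\<phi> x = ereal a" and fy: "\<phi> y = ereal b"
    and l: "0 < l" "l < 1" and nm: "\<phi> ((1-l) *\<^sub>R x + l *\<^sub>R y) \<noteq> -\<infinity>"
  shows "\<exists>c. \<phi> ((1-l) *\<^sub>R x + l *\<^sub>R y) = ereal c \<and> c \<le> (1-l)*a + l*b - \<mu>/2*l*(1-l)*(norm(x-y))\<^sup>2"
proof -
  define z where "z = (1-l) *\<^sub>R x + l *\<^sub>R y"
  have "\<phi> z - ereal (\<mu>/2*(norm z)\<^sup>2) \<le> ereal (1-l) * (\<phi> x - ereal (\<mu>/2*(norm x)\<^sup>2)) + ereal l * (\<phi> y - ereal (\<mu>/2*(norm y)\<^sup>2))"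
    using sc l unfolding strongly_convex_def convex_fun_def z_def by blast
  also have "\<dots> = ereal ((1-l)*(a - \<mu>/2*(norm x)\<^sup>2) + l*(b - \<mu>/2*(norm y)\<^sup>2))"
    by (simp add: fx fy)
  finally have *: "\<phi> z - ereal (\<mu>/2*(norm z)\<^sup>2) \<le> ereal ((1-l)*(a - \<mu>/2*(norm x)\<^sup>2) + l*(b - \<mu>/2*(norm y)\<^sup>2))" .
  show ?thesis
  proof (cases "\<phi> z")
    case (real c)
    with * have "c - \<mu>/2*(norm z)\<^sup>2 \<le> (1-l)*(a - \<mu>/2*(norm x)\<^sup>2) + l*(b - \<mu>/2*(norm y)\<^sup>2)" by simp
    then have "c \<le> (1-l)*a + l*b - \<mu>/2*l*(1-l)*(norm(x-y))\<^sup>2"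
      unfolding z_def norm_comb_sq by (rule r1)
    then show ?thesis using real z_def by auto
  next
    case PInf with * show ?thesis by simp
  next
    case MInf with nm z_def show ?thesis by simp
  qed
qed

lemma limit_le_aux:
  fixes A B C :: real
  assumes "\<And>l. 0 < l \<Longrightarrow> l < 1 \<Longrightarrow> A - l * C \<le> B" "C \<ge> 0"
  shows "A \<le> B"
proof (rule ccontr)
  assume "\<not> A \<le> B"
  then have d: "A - B > 0" by simp
  define l where "l = min (1/2) ((A - B) / (2 * (C + 1)))"
  have l0: "0 < l" "l < 1" using d assms(2) by (auto simp: l_def)
  have "l * C \<le> (A - B) / (2 * (C + 1)) * C" using assms(2) by (intro mult_right_mono) (auto simp: l_def)
  also have "\<dots> \<le> (A - B) / 2" using d assms(2) by (simp add: field_simps)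
  finally have "A - l * C > B" using d by simp
  with assms(1)[OF l0] show False by simp
qed

lemma sg_growth:
  fixes \<phi> :: "'a::real_inner \<Rightarrow> ereal"
  assumes sc: "strongly_convex \<mu> \<phi>" and v: "v \<in> subdiff \<phi> p" and mu: "\<mu> \<ge> 0"
  shows "\<phi> y \<ge> \<phi> p + ereal (inner v (y - p) + \<mu>/2 * (norm (y - p))\<^sup>2)"
proof -
  from v have fin: "\<bar>\<phi> p\<bar> \<noteq> \<infinity>" and sub: "\<And>y. \<phi> p + ereal (inner v (y - p)) \<le> \<phi> y"
    unfolding subdiff_def by auto
  obtain a where a: "\<phi> p = ereal a" using fin by (cases "\<phi> p") auto
  show ?thesis
  proof (cases "\<phi> y")
    case PInf then show ?thesis by simp
  next
    case MInf with sub[of y] a show ?thesis by simp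
  next
    case (real b)
    have key: "a + inner v (y - p) + \<mu>/2*(norm (y-p))\<^sup>2 - l * (\<mu>/2*(norm (y-p))\<^sup>2) \<le> b"
      if l: "0 < l" "l < 1" for l
    proof -
      define z where "z = (1-l) *\<^sub>R p + l *\<^sub>R y"
      have zp: "z - p = l *\<^sub>R (y - p)" by (simp add: z_def algebra_simps)
      have lb: "\<phi> p + ereal (inner v (z - p)) \<le> \<phi> z" by (rule sub)
      then have "\<phi> z \<noteq> -\<infinity>" using a by auto
      from sc_real[OF sc a real l this[unfolded z_def]] obtain c where
        c: "\<phi> z = ereal c" "c \<le> (1-l)*a + l*b - \<mu>/2*l*(1-l)*(norm(p-y))\<^sup>2" unfolding z_def by auto
      from lb c a zp have "a + l * inner v (y - p) \<le> c" by simp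
      with c(2) have "l * (a + inner v (y - p) + \<mu>/2*(1-l)*(norm (p-y))\<^sup>2) \<le> l * b"
        by (simp add: algebra_simps)
      then have "a + inner v (y - p) + \<mu>/2*(1-l)*(norm (p-y))\<^sup>2 \<le> b" using l by simp
      moreover have "\<mu>/2*(1-l)*(norm (p-y))\<^sup>2 = \<mu>/2*(norm (y-p))\<^sup>2 - l*(\<mu>/2*(norm (y-p))\<^sup>2)"
        unfolding norm_minus_commute[of p y] by (rule r2)
      ultimately show ?thesis by linarith
    qed
    have "a + inner v (y - p) + \<mu>/2*(norm (y-p))\<^sup>2 \<le> b"
      by (rule limit_le_aux[OF key]) (use mu in auto)
    then show ?thesis using a real by simp
  qed
qed


lemma mid_norm_sq:
  fixes a b z :: "'a::real_inner"
  shows "(norm ((1/2) *\<^sub>R (a + b) - z))\<^sup>2 = ((norm (a - z))\<^sup>2 + (norm (b - z))\<^sup>2)/2 - (norm (a - b))\<^sup>2/4"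
proof -
  have z: "(1/2::real) *\<^sub>R z + (1/2) *\<^sub>R z = z" by (metis scaleR_add_left field_sum_of_halves scaleR_one)
  have e: "(1/2) *\<^sub>R (a + b) - z = (1 - 1/2) *\<^sub>R (a - z) + (1/2) *\<^sub>R (b - z)"
    using z by (simp add: algebra_simps)
  show ?thesis unfolding e norm_comb_sq by (simp add: algebra_simps)
qed

lemma quad_lower:
  fixes y z v :: "'a::real_inner" and \<gamma> :: real
  shows "\<gamma> * inner v (y - z) + (norm (y - z))\<^sup>2 / 2 \<ge> - (\<gamma> * \<gamma> * (norm v)\<^sup>2 / 2)"
proof -
  have "0 \<le> (norm (y - z + \<gamma> *\<^sub>R v))\<^sup>2" by simp
  also have "\<dots> = (norm (y - z))\<^sup>2 + 2 * \<gamma> * inner v (y - z) + \<gamma> * \<gamma> * (norm v)\<^sup>2"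
    by (simp add: power2_norm_eq_inner inner_add_left inner_add_right inner_diff_left inner_diff_right inner_commute algebra_simps)
  finally show ?thesis by simp
qed

lemma sc_mid:
  fixes \<phi> :: "'a::real_inner \<Rightarrow> ereal"
  assumes sc: "strongly_convex \<mu> \<phi>" and mu: "\<mu> \<ge> 0" and fx: "\<phi> x = ereal a" and fy: "\<phi> y = ereal b"
    and nm: "\<phi> ((1/2) *\<^sub>R (x + y)) \<noteq> -\<infinity>"
  shows "\<exists>c. \<phi> ((1/2) *\<^sub>R (x + y)) = ereal c \<and> c \<le> (a + b) / 2"
proof -
  have e: "(1/2) *\<^sub>R (x + y) = (1 - 1/2) *\<^sub>R x + (1/2::real) *\<^sub>R y" by (simp add: algebra_simps)
  from sc_real[OF sc fx fy, of "1/2"] nm obtain c where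
    c: "\<phi> ((1/2) *\<^sub>R (x + y)) = ereal c" "c \<le> (1-1/2)*a + 1/2*b - \<mu>/2*(1/2)*(1-1/2)*(norm(x-y))\<^sup>2"
    unfolding e by auto
  have "\<mu>/2*(1/2)*(1-1/2)*(norm(x-y))\<^sup>2 \<ge> 0" using mu by simp
  with c show ?thesis by auto
qed

lemma aux_lin: fixes mr fn u fk w D :: real
  shows "mr \<le> fn \<Longrightarrow> fn < mr + u \<Longrightarrow> mr \<le> fk \<Longrightarrow> fk < mr + w \<Longrightarrow> mr \<le> (fn + fk)/2 - D/8 \<Longrightarrow> D \<le> 4*(u+w)"
  by argo

lemma prox_exists_unique:
  fixes \<phi> :: "'a::euclidean_space \<Rightarrow> ereal"
  assumes sc: "strongly_convex \<mu> \<phi>" and mu: "\<mu> \<ge> 0" and cl: "closed_fun \<phi>"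
    and sd: "v0 \<in> subdiff \<phi> p0" and g: "\<gamma> > 0"
  shows "\<exists>!p. \<forall>y. ereal \<gamma> * \<phi> p + ereal ((norm (p - z))\<^sup>2 / 2) \<le> ereal \<gamma> * \<phi> y + ereal ((norm (y - z))\<^sup>2 / 2)"
proof -
  define F where "F y = ereal \<gamma> * \<phi> y + ereal ((norm (y - z))\<^sup>2 / 2)" for y
  from sd have fin0: "\<bar>\<phi> p0\<bar> \<noteq> \<infinity>" and minor: "\<And>y. \<phi> p0 + ereal (inner v0 (y - p0)) \<le> \<phi> y"
    unfolding subdiff_def by auto
  obtain a0 where a0: "\<phi> p0 = ereal a0" using fin0 by (cases "\<phi> p0") auto
  have nm: "\<phi> y \<noteq> -\<infinity>" for y using minor[of y] a0 by auto
  define m0 where "m0 = \<gamma> * a0 + \<gamma> * inner v0 (z - p0) - \<gamma> * \<gamma> * (norm v0)\<^sup>2 / 2"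
  have Fb: "F y \<ge> ereal m0" for y
  proof (cases "\<phi> y")
    case (real b)
    have "a0 + inner v0 (y - p0) \<le> b" using minor[of y] a0 real by simp
    then have "\<gamma> * (a0 + inner v0 (y - p0)) \<le> \<gamma> * b" using g by simp
    moreover have "\<gamma> * inner v0 (y - z) + (norm (y - z))\<^sup>2 / 2 \<ge> - (\<gamma> * \<gamma> * (norm v0)\<^sup>2 / 2)"
      by (rule quad_lower)
    moreover have "inner v0 (y - p0) = inner v0 (y - z) + inner v0 (z - p0)" by (simp add: inner_diff_right)
    ultimately have "m0 \<le> \<gamma> * b + (norm (y - z))\<^sup>2 / 2" unfolding m0_def by (simp add: algebra_simps)
    then show ?thesis using real by (simp add: F_def)
  qed (use nm g in \<open>auto simp: F_def\<close>)
  have FnotM: "F y \<noteq> -\<infinity>" for y using Fb[of y] by auto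
  have Ffin: "\<exists>b. \<phi> y = ereal b \<and> F y = ereal (\<gamma> * b + (norm (y - z))\<^sup>2 / 2)" if "F y \<noteq> \<infinity>" for y
  proof (cases "\<phi> y")
    case PInf then show ?thesis using that g by (simp add: F_def)
  next
    case MInf then show ?thesis using nm by simp
  qed (simp add: F_def)
  have mid: "F ((1/2) *\<^sub>R (x + y)) \<le> ereal ((A + B) / 2 - (norm (x - y))\<^sup>2 / 8)"
    if FxA: "F x = ereal A" and FyB: "F y = ereal B" for x y A B
  proof -
    obtain a where a: "\<phi> x = ereal a" "A = \<gamma> * a + (norm (x - z))\<^sup>2 / 2" using Ffin[of x] FxA by auto
    obtain b where b: "\<phi> y = ereal b" "B = \<gamma> * b + (norm (y - z))\<^sup>2 / 2" using Ffin[of y] FyB by auto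
    obtain c where c: "\<phi> ((1/2) *\<^sub>R (x + y)) = ereal c" "c \<le> (a + b) / 2"
      using sc_mid[OF sc mu a(1) b(1) nm] by auto
    have "\<gamma> * c \<le> \<gamma> * ((a + b) / 2)" using c g by simp
    also have "\<dots> = (\<gamma> * a + \<gamma> * b) / 2" by (simp add: distrib_left)
    finally have gc: "\<gamma> * c \<le> (\<gamma> * a + \<gamma> * b) / 2" .
    have "\<gamma> * c + (((norm (x - z))\<^sup>2 + (norm (y - z))\<^sup>2)/2 - (norm (x - y))\<^sup>2/4) / 2
        \<le> (A + B) / 2 - (norm (x - y))\<^sup>2 / 8" unfolding a(2) b(2) using gc by (simp add: field_simps)
    then show ?thesis by (simp add: F_def c mid_norm_sq)
  qed
  define m where "m = (INF y. F y)"
  have mle: "m \<le> F p0" unfolding m_def by (rule INF_lower) simp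
  have Fp0: "F p0 \<noteq> \<infinity>" using a0 by (simp add: F_def)
  have mge: "ereal m0 \<le> m" unfolding m_def by (rule INF_greatest) (use Fb in auto)
  obtain mr where mr: "m = ereal mr" using mle mge Fp0 by (cases m) auto
  have "\<exists>p. F p < ereal (mr + 1 / (real n + 1))" for n
  proof -
    have "m < ereal (mr + 1 / (real n + 1))" using mr by simp
    then show ?thesis unfolding m_def INF_less_iff by auto
  qed
  then obtain P where P: "\<And>n. F (P n) < ereal (mr + 1 / (real n + 1))" by metis
  have Pge: "m \<le> F (P n)" for n unfolding m_def by (rule INF_lower) simp
  obtain f where f: "\<And>n. F (P n) = ereal (f n)"
  proof -
    have "\<exists>r. F (P n) = ereal r" for n using P[of n] FnotM[of "P n"] by (cases "F (P n)") auto
    then show ?thesis using that by metis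
  qed
  have fb: "mr \<le> f n" "f n < mr + 1 / (real n + 1)" for n using P[of n] Pge[of n] f[of n] mr by auto
  have dist: "(norm (P n - P k))\<^sup>2 \<le> 4 * (1 / (real n + 1) + 1 / (real k + 1))" for n k
  proof -
    have "m \<le> F ((1/2) *\<^sub>R (P n + P k))" unfolding m_def by (rule INF_lower) simp
    also have "\<dots> \<le> ereal ((f n + f k) / 2 - (norm (P n - P k))\<^sup>2 / 8)" by (rule mid[OF f f])
    finally have "mr \<le> (f n + f k) / 2 - (norm (P n - P k))\<^sup>2 / 8" using mr by simp
    with fb[of n] fb[of k] show ?thesis by (intro aux_lin[of mr "f n" _ "f k"]) 
  qed
  have "Cauchy P"
  proof (rule CauchyI)
    fix e :: real assume e: "0 < e"
    obtain N :: nat where N: "8 / (e\<^sup>2) < real N" using reals_Archimedean2 by blast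
    show "\<exists>M. \<forall>m\<ge>M. \<forall>n\<ge>M. norm (P m - P n) < e"
    proof (intro exI allI impI)
      fix n k assume nk: "N \<le> n" "N \<le> k"
      have e2: "e\<^sup>2 > 0" using e by simp
      have "1 / (real n + 1) < e\<^sup>2 / 8"
      proof -
        have "8 / e\<^sup>2 < real n + 1" using N nk by linarith
        then show ?thesis using e2 by (simp add: field_simps)
      qed
      moreover have "1 / (real k + 1) < e\<^sup>2 / 8"
      proof -
        have "8 / e\<^sup>2 < real k + 1" using N nk by linarith
        then show ?thesis using e2 by (simp add: field_simps)
      qed
      ultimately have "(norm (P n - P k))\<^sup>2 < e\<^sup>2" using dist[of n k] by argo
      then show "norm (P n - P k) < e" using e by (simp add: power_less_imp_less_base)
    qed
  qed
  then obtain pb where lim: "P \<longlonglongrightarrow> pb" unfolding Cauchy_convergent_iff convergent_def by blast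
  define s where "s n = (mr + 1 / (real n + 1) - (norm (P n - z))\<^sup>2 / 2) / \<gamma>" for n
  define sb where "sb = (mr - (norm (pb - z))\<^sup>2 / 2) / \<gamma>"
  have inepi: "(P n, s n) \<in> {(x, s::real). \<phi> x \<le> ereal s}" for n
  proof -
    obtain b where b: "\<phi> (P n) = ereal b" "F (P n) = ereal (\<gamma> * b + (norm (P n - z))\<^sup>2 / 2)"
      using Ffin[of "P n"] f[of n] by auto
    have "\<gamma> * b + (norm (P n - z))\<^sup>2 / 2 < mr + 1 / (real n + 1)" using b(2) f[of n] fb[of n] by simp
    moreover have "\<gamma> * s n = mr + 1 / (real n + 1) - (norm (P n - z))\<^sup>2 / 2" using g by (simp add: s_def)
    ultimately have "\<gamma> * b < \<gamma> * s n" by argo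
    then have "b \<le> s n" using g by simp
    then show ?thesis using b by simp
  qed
  have l1: "(\<lambda>n. mr + 1 / (real n + 1)) \<longlonglongrightarrow> mr"
    using LIMSEQ_inverse_real_of_nat_add[of mr] by (simp add: divide_inverse add.commute)
  have "s \<longlonglongrightarrow> sb" unfolding s_def sb_def
    by (intro tendsto_intros lim l1) (use g in auto)
  then have lim2: "(\<lambda>n. (P n, s n)) \<longlonglongrightarrow> (pb, sb)" using lim by (intro tendsto_Pair)
  have inepi': "\<forall>n. (\<lambda>n. (P n, s n)) n \<in> {(x, s::real). \<phi> x \<le> ereal s}" using inepi by simp
  have cs: "\<forall>x l. (\<forall>n. x n \<in> {(x, s::real). \<phi> x \<le> ereal s}) \<and> x \<longlonglongrightarrow> l \<longrightarrow> l \<in> {(x, s::real). \<phi> x \<le> ereal s}"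
    using cl unfolding closed_fun_def closed_sequential_limits .
  have "(pb, sb) \<in> {(x, s::real). \<phi> x \<le> ereal s}"
    using spec[OF spec[OF cs, of "\<lambda>n. (P n, s n)"], of "(pb, sb)"] inepi' lim2 by blast
  then have pb: "\<phi> pb \<le> ereal sb" by simp
  have "F pb \<le> ereal mr"
  proof (cases "\<phi> pb")
    case (real b)
    have "\<gamma> * b \<le> \<gamma> * sb" using pb real g by simp
    moreover have "\<gamma> * sb = mr - (norm (pb - z))\<^sup>2 / 2" using g by (simp add: sb_def)
    ultimately show ?thesis using real by (simp add: F_def)
  qed (use pb nm in auto)
  then have pbmin: "\<forall>y. F pb \<le> F y"
    using mr unfolding m_def by (metis INF_lower UNIV_I order_trans)
  have uniq: "p = p'" if p: "\<forall>y. F p \<le> F y" and p': "\<forall>y. F p' \<le> F y" for p p'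
  proof -
    have "F p \<le> F p0" using p by simp
    then obtain A where A: "F p = ereal A" using Fp0 FnotM[of p] by (cases "F p") auto
    have "F p' = F p" using p p' by (meson order.antisym)
    then have A': "F p' = ereal A" using A by simp
    have "F p \<le> F ((1/2) *\<^sub>R (p + p'))" using p by simp
    also have "\<dots> \<le> ereal ((A + A) / 2 - (norm (p - p'))\<^sup>2 / 8)" by (rule mid[OF A A'])
    finally have "(norm (p - p'))\<^sup>2 \<le> 0" using A by simp
    then show ?thesis by simp
  qed
  show ?thesis unfolding F_def[symmetric] using pbmin uniq by blast
qed

lemma prox_unique_min:
  fixes \<phi> :: "'a::euclidean_space \<Rightarrow> ereal"
  assumes sc: "strongly_convex \<mu> \<phi>" and mu: "\<mu> \<ge> 0" and cl: "closed_fun \<phi>"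
    and sd: "v0 \<in> subdiff \<phi> p0" and g: "\<gamma> > 0"
  shows "\<forall>y. ereal \<gamma> * \<phi> (prox \<gamma> \<phi> z) + ereal ((norm (prox \<gamma> \<phi> z - z))\<^sup>2 / 2) \<le> ereal \<gamma> * \<phi> y + ereal ((norm (y - z))\<^sup>2 / 2)"
    and "(\<forall>y. ereal \<gamma> * \<phi> p + ereal ((norm (p - z))\<^sup>2 / 2) \<le> ereal \<gamma> * \<phi> y + ereal ((norm (y - z))\<^sup>2 / 2)) \<Longrightarrow> prox \<gamma> \<phi> z = p"
proof -
  note eu = prox_exists_unique[OF sc mu cl sd g, of z]
  show "\<forall>y. ereal \<gamma> * \<phi> (prox \<gamma> \<phi> z) + ereal ((norm (prox \<gamma> \<phi> z - z))\<^sup>2 / 2) \<le> ereal \<gamma> * \<phi> y + ereal ((norm (y - z))\<^sup>2 / 2)"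
    unfolding prox_def by (rule theI'[OF eu])
  show "prox \<gamma> \<phi> z = p" if "\<forall>y. ereal \<gamma> * \<phi> p + ereal ((norm (p - z))\<^sup>2 / 2) \<le> ereal \<gamma> * \<phi> y + ereal ((norm (y - z))\<^sup>2 / 2)"
    unfolding prox_def using eu that by (rule the1_equality)
qed


lemma aux2:
  fixes l ga gb gc I H :: real
  assumes "0 < l" "gc \<le> ga - l*ga + l*gb" "ga + Q \<le> gc + Q + l*I + l*(l*H)/2"
  shows "ga - gb - I - l*(H/2) \<le> 0"
proof -
  have e: "l*(ga - gb - I - l*(H/2)) = l*ga - l*gb - l*I - l*(l*H)/2" by (simp add: field_simps)
  have "l*(ga - gb - I - l*(H/2)) \<le> 0" unfolding e using assms(2,3) by argo
  then show ?thesis using assms(1) by (simp add: mult_le_0_iff)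
qed

lemma norm_shift_sq:
  fixes p z y :: "'a::real_inner"
  shows "(norm ((1-l) *\<^sub>R p + l *\<^sub>R y - z))\<^sup>2 = (norm (p - z))\<^sup>2 + 2 * (l * inner (p - z) (y - p)) + l * (l * (norm (y - p))\<^sup>2)"
proof -
  have e: "(1-l) *\<^sub>R p + l *\<^sub>R y - z = (p - z) + l *\<^sub>R (y - p)" by (simp add: algebra_simps)
  show ?thesis unfolding e
    by (simp add: power2_norm_eq_inner inner_add_left inner_add_right inner_diff_left inner_diff_right inner_commute algebra_simps)
qed

lemma prox_subgrad:
  fixes \<phi> :: "'a::euclidean_space \<Rightarrow> ereal"
  assumes sc: "strongly_convex \<mu> \<phi>" and mu: "\<mu> \<ge> 0" and cl: "closed_fun \<phi>"
    and sd: "v0 \<in> subdiff \<phi> p0" and g: "\<gamma> > 0"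
  shows "(1/\<gamma>) *\<^sub>R (z - prox \<gamma> \<phi> z) \<in> subdiff \<phi> (prox \<gamma> \<phi> z)"
proof -
  define p where "p = prox \<gamma> \<phi> z"
  have min: "\<And>y. ereal \<gamma> * \<phi> p + ereal ((norm (p - z))\<^sup>2 / 2) \<le> ereal \<gamma> * \<phi> y + ereal ((norm (y - z))\<^sup>2 / 2)"
    using prox_unique_min(1)[OF sc mu cl sd g, of z] unfolding p_def by blast
  from sd have fin0: "\<bar>\<phi> p0\<bar> \<noteq> \<infinity>" and minor: "\<And>y. \<phi> p0 + ereal (inner v0 (y - p0)) \<le> \<phi> y"
    unfolding subdiff_def by auto
  obtain a0 where a0: "\<phi> p0 = ereal a0" using fin0 by (cases "\<phi> p0") auto
  have nm: "\<phi> y \<noteq> -\<infinity>" for y using minor[of y] a0 by auto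
  have "\<phi> p \<noteq> \<infinity>"
  proof
    assume "\<phi> p = \<infinity>"
    then have "ereal \<gamma> * \<phi> p + ereal ((norm (p - z))\<^sup>2 / 2) = \<infinity>" using g by simp
    with min[of p0] a0 show False by simp
  qed
  then obtain a where a: "\<phi> p = ereal a" using nm[of p] by (cases "\<phi> p") auto
  have "\<phi> p + ereal (inner ((1/\<gamma>) *\<^sub>R (z - p)) (y - p)) \<le> \<phi> y" for y
  proof (cases "\<phi> y")
    case PInf then show ?thesis by simp
  next
    case MInf then show ?thesis using nm by simp
  next
    case (real b)
    have key: "\<gamma>*a - \<gamma>*b - inner (p - z) (y - p) - l*((norm (y - p))\<^sup>2 / 2) \<le> 0" if l: "0 < l" "l < 1" for l
    proof -
      define yl where "yl = (1-l) *\<^sub>R p + l *\<^sub>R y"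
      obtain c where c: "\<phi> yl = ereal c" "c \<le> (1-l)*a + l*b - \<mu>/2*l*(1-l)*(norm(p-y))\<^sup>2"
        using sc_real[OF sc a real l nm] unfolding yl_def by blast
      have "\<mu>/2*l*(1-l)*(norm(p-y))\<^sup>2 \<ge> 0" using mu l by simp
      then have "c \<le> (1-l)*a + l*b" using c(2) by linarith
      then have "\<gamma> * c \<le> \<gamma> * ((1-l)*a + l*b)" using g by simp
      also have "\<dots> = \<gamma>*a - l*(\<gamma>*a) + l*(\<gamma>*b)" by (simp add: algebra_simps)
      finally have h1: "\<gamma> * c \<le> \<gamma>*a - l*(\<gamma>*a) + l*(\<gamma>*b)" .
      have "ereal \<gamma> * \<phi> p + ereal ((norm (p - z))\<^sup>2 / 2) \<le> ereal \<gamma> * \<phi> yl + ereal ((norm (yl - z))\<^sup>2 / 2)"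
        by (rule min)
      then have h0: "\<gamma>*a + (norm (p - z))\<^sup>2 / 2 \<le> \<gamma>*c + (norm (yl - z))\<^sup>2 / 2" using a c by simp
      have sh: "(norm (yl - z))\<^sup>2 = (norm (p - z))\<^sup>2 + 2 * (l * inner (p - z) (y - p)) + l * (l * (norm (y - p))\<^sup>2)"
        unfolding yl_def by (rule norm_shift_sq)
      have h2: "\<gamma>*a + (norm (p - z))\<^sup>2 / 2 \<le> \<gamma>*c + (norm (p - z))\<^sup>2 / 2 + l * inner (p - z) (y - p) + l * (l * (norm (y - p))\<^sup>2) / 2"
        using h0 sh by argo
      show ?thesis by (rule aux2[OF l(1) h1 h2])
    qed
    have "\<gamma>*a - \<gamma>*b - inner (p - z) (y - p) \<le> 0"
      using limit_le_aux[of "\<gamma>*a - \<gamma>*b - inner (p - z) (y - p)" "(norm (y - p))\<^sup>2 / 2" 0] key by simp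
    then have "\<gamma> * (a + inner ((1/\<gamma>) *\<^sub>R (z - p)) (y - p)) \<le> \<gamma> * b"
      using g by (simp add: algebra_simps inner_diff_left)
    then have "a + inner ((1/\<gamma>) *\<^sub>R (z - p)) (y - p) \<le> b" using g by simp
    then show ?thesis using a real by simp
  qed
  then show ?thesis unfolding p_def[symmetric] subdiff_def using a by auto
qed

lemma prox_of_subgrad:
  fixes \<phi> :: "'a::euclidean_space \<Rightarrow> ereal"
  assumes sc: "strongly_convex \<mu> \<phi>" and mu: "\<mu> \<ge> 0" and cl: "closed_fun \<phi>"
    and sd: "v0 \<in> subdiff \<phi> p0" and g: "\<gamma> > 0"
    and v: "(1/\<gamma>) *\<^sub>R (z - p) \<in> subdiff \<phi> p"
  shows "prox \<gamma> \<phi> z = p"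
proof (rule prox_unique_min(2)[OF sc mu cl sd g], intro allI)
  fix y
  from v have fin: "\<bar>\<phi> p\<bar> \<noteq> \<infinity>" and sub: "\<phi> p + ereal (inner ((1/\<gamma>) *\<^sub>R (z - p)) (y - p)) \<le> \<phi> y"
    unfolding subdiff_def by auto
  obtain a where a: "\<phi> p = ereal a" using fin by (cases "\<phi> p") auto
  show "ereal \<gamma> * \<phi> p + ereal ((norm (p - z))\<^sup>2 / 2) \<le> ereal \<gamma> * \<phi> y + ereal ((norm (y - z))\<^sup>2 / 2)"
  proof (cases "\<phi> y")
    case PInf then show ?thesis using g a by simp
  next
    case MInf then show ?thesis using sub a by simp
  next
    case (real b)
    have h: "a + inner ((1/\<gamma>) *\<^sub>R (z - p)) (y - p) \<le> b" using sub a real by simp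
    have "\<gamma> * a + inner (z - p) (y - p) \<le> \<gamma> * b"
    proof -
      have "\<gamma> * (a + inner ((1/\<gamma>) *\<^sub>R (z - p)) (y - p)) \<le> \<gamma> * b" using h g by simp
      then show ?thesis using g by (simp add: algebra_simps)
    qed
    moreover have "(norm (y - z))\<^sup>2 = (norm (p - z))\<^sup>2 + 2 * inner (p - z) (y - p) + (norm (y - p))\<^sup>2"
    proof -
      have e: "(norm ((p - z) + (y - p)))\<^sup>2 = (norm (p - z))\<^sup>2 + 2 * inner (p - z) (y - p) + (norm (y - p))\<^sup>2"
        by (simp only: power2_norm_eq_inner inner_add_left inner_add_right inner_commute[of "y - p" "p - z"])
      have "(p - z) + (y - p) = y - z" by simp
      then show ?thesis using e by simp
    qed
    moreover have "inner (z - p) (y - p) = - inner (p - z) (y - p)" by (simp add: inner_diff_left)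
    moreover have "(norm (y - p))\<^sup>2 \<ge> 0" by simp
    ultimately have "\<gamma> * a + (norm (p - z))\<^sup>2 / 2 \<le> \<gamma> * b + (norm (y - z))\<^sup>2 / 2" by argo
    then show ?thesis using a real by simp
  qed
qed

lemma subdiff_strong_mono:
  fixes \<phi> :: "'a::real_inner \<Rightarrow> ereal"
  assumes sc: "strongly_convex \<mu> \<phi>" and mu: "\<mu> \<ge> 0"
    and v1: "v1 \<in> subdiff \<phi> p1" and v2: "v2 \<in> subdiff \<phi> p2"
  shows "inner (v1 - v2) (p1 - p2) \<ge> \<mu> * (norm (p1 - p2))\<^sup>2"
proof -
  obtain a1 where a1: "\<phi> p1 = ereal a1" using v1 unfolding subdiff_def by (cases "\<phi> p1") auto
  obtain a2 where a2: "\<phi> p2 = ereal a2" using v2 unfolding subdiff_def by (cases "\<phi> p2") auto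
  have "\<phi> p2 \<ge> \<phi> p1 + ereal (inner v1 (p2 - p1) + \<mu>/2 * (norm (p2 - p1))\<^sup>2)" by (rule sg_growth[OF sc v1 mu])
  then have h1: "a2 \<ge> a1 + inner v1 (p2 - p1) + \<mu>/2 * (norm (p2 - p1))\<^sup>2" using a1 a2 by simp
  have "\<phi> p1 \<ge> \<phi> p2 + ereal (inner v2 (p1 - p2) + \<mu>/2 * (norm (p1 - p2))\<^sup>2)" by (rule sg_growth[OF sc v2 mu])
  then have h2: "a1 \<ge> a2 + inner v2 (p1 - p2) + \<mu>/2 * (norm (p1 - p2))\<^sup>2" using a1 a2 by simp
  have e1: "inner v1 (p2 - p1) = - inner v1 (p1 - p2)" by (simp add: inner_diff_right)
  have e2: "norm (p2 - p1) = norm (p1 - p2)" by (rule norm_minus_commute)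
  have e3: "inner (v1 - v2) (p1 - p2) = inner v1 (p1 - p2) - inner v2 (p1 - p2)" by (simp add: inner_diff_left)
  show ?thesis using h1 h2 unfolding e1 e2 e3 by argo
qed

lemma prox_strong_mono:
  fixes \<phi> :: "'a::euclidean_space \<Rightarrow> ereal"
  assumes sc: "strongly_convex \<mu> \<phi>" and mu: "\<mu> \<ge> 0" and cl: "closed_fun \<phi>"
    and sd: "v0 \<in> subdiff \<phi> p0" and g: "\<gamma> > 0"
  shows "inner ((z1 - prox \<gamma> \<phi> z1) - (z2 - prox \<gamma> \<phi> z2)) (prox \<gamma> \<phi> z1 - prox \<gamma> \<phi> z2)
           \<ge> \<gamma> * \<mu> * (norm (prox \<gamma> \<phi> z1 - prox \<gamma> \<phi> z2))\<^sup>2"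
proof -
  have "inner ((1/\<gamma>) *\<^sub>R (z1 - prox \<gamma> \<phi> z1) - (1/\<gamma>) *\<^sub>R (z2 - prox \<gamma> \<phi> z2)) (prox \<gamma> \<phi> z1 - prox \<gamma> \<phi> z2)
        \<ge> \<mu> * (norm (prox \<gamma> \<phi> z1 - prox \<gamma> \<phi> z2))\<^sup>2"
    by (rule subdiff_strong_mono[OF sc mu prox_subgrad[OF sc mu cl sd g] prox_subgrad[OF sc mu cl sd g]])
  then have "(1/\<gamma>) * inner ((z1 - prox \<gamma> \<phi> z1) - (z2 - prox \<gamma> \<phi> z2)) (prox \<gamma> \<phi> z1 - prox \<gamma> \<phi> z2)
        \<ge> \<mu> * (norm (prox \<gamma> \<phi> z1 - prox \<gamma> \<phi> z2))\<^sup>2"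
    by (simp add: scaleR_diff_right[symmetric] del: scaleR_diff_right)
  then show ?thesis using g by (simp add: field_simps)
qed

lemma prox_nonexp:
  fixes \<phi> :: "'a::euclidean_space \<Rightarrow> ereal"
  assumes sc: "strongly_convex \<mu> \<phi>" and mu: "\<mu> \<ge> 0" and cl: "closed_fun \<phi>"
    and sd: "v0 \<in> subdiff \<phi> p0" and g: "\<gamma> > 0"
  shows "norm (prox \<gamma> \<phi> z1 - prox \<gamma> \<phi> z2) \<le> norm (z1 - z2)"
proof -
  define d where "d = prox \<gamma> \<phi> z1 - prox \<gamma> \<phi> z2"
  have "inner ((z1 - z2) - d) d \<ge> \<gamma> * \<mu> * (norm d)\<^sup>2"
    using prox_strong_mono[OF sc mu cl sd g, of z1 z2] unfolding d_def by (simp add: algebra_simps)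
  moreover have "\<gamma> * \<mu> * (norm d)\<^sup>2 \<ge> 0" using g mu by simp
  ultimately have "inner (z1 - z2) d \<ge> (norm d)\<^sup>2" by (simp add: inner_diff_left power2_norm_eq_inner)
  also have "inner (z1 - z2) d \<le> norm (z1 - z2) * norm d" by (rule norm_cauchy_schwarz)
  finally have "norm d * norm d \<le> norm (z1 - z2) * norm d" by (simp add: power2_eq_square)
  then show ?thesis unfolding d_def[symmetric]
    by (metis mult_le_cancel_right norm_ge_zero order_le_less order_trans mult_zero_left)
qed


lemma conj_ge: "conj_fun \<phi> v \<ge> ereal (inner v y) - \<phi> y"
  unfolding conj_fun_def by (rule SUP_upper) simp

lemma conj_FY_eq:
  assumes v: "v \<in> subdiff \<phi> p" and a: "\<phi> p = ereal a"
  shows "conj_fun \<phi> v = ereal (inner v p - a)"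
proof (rule antisym)
  show "conj_fun \<phi> v \<le> ereal (inner v p - a)"
    unfolding conj_fun_def
  proof (rule SUP_least)
    fix y
    have sub: "\<phi> p + ereal (inner v (y - p)) \<le> \<phi> y" using v unfolding subdiff_def by auto
    show "ereal (inner v y) - \<phi> y \<le> ereal (inner v p - a)"
    proof (cases "\<phi> y")
      case (real b)
      then have "a + inner v (y - p) \<le> b" using sub a by simp
      then show ?thesis using real by (simp add: inner_diff_right)
    qed (use sub a in auto)
  qed
  show "ereal (inner v p - a) \<le> conj_fun \<phi> v" using conj_ge[where \<phi>=\<phi> and v=v and y=p] a by simp
qed

lemma conj_closed: "closed_fun (conj_fun \<phi>)"
proof -
  have e: "{(u, s::real). conj_fun \<phi> u \<le> ereal s} = (\<Inter>x. {(u, s). ereal (inner u x) - \<phi> x \<le> ereal s})"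
    unfolding conj_fun_def by (auto simp: SUP_le_iff)
  have "closed {(u, s::real). ereal (inner u x) - \<phi> x \<le> ereal s}" for x
  proof (cases "\<phi> x")
    case (real c)
    have "{(u, s::real). ereal (inner u x) - \<phi> x \<le> ereal s} = {us. inner (fst us) x - c \<le> snd us}"
      using real by auto
    also have "closed \<dots>" by (intro closed_Collect_le continuous_intros)
    finally show ?thesis .
  next
    case PInf
    then have "{(u, s::real). ereal (inner u x) - \<phi> x \<le> ereal s} = UNIV" by auto
    then show ?thesis by simp
  next
    case MInf
    then have "{(u, s::real). ereal (inner u x) - \<phi> x \<le> ereal s} = {}" by auto
    then show ?thesis by simp
  qed
  then show ?thesis unfolding closed_fun_def e by (intro closed_INT) auto
qed

lemma epi_convex:
  fixes h :: "'a::real_vector \<Rightarrow> ereal"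
  assumes cv: "convex_fun h"
  shows "convex {(x, s::real). h x \<le> ereal s}"
  unfolding convex_def
proof (intro ballI allI impI)
  fix X Y :: "'a \<times> real" and u v :: real
  assume X: "X \<in> {(x, s). h x \<le> ereal s}" and Y: "Y \<in> {(x, s). h x \<le> ereal s}" and uv: "0 \<le> u" "0 \<le> v" "u + v = 1"
  obtain x s where xs: "X = (x, s)" "h x \<le> ereal s" using X by auto
  obtain y t where yt: "Y = (y, t)" "h y \<le> ereal t" using Y by auto
  show "u *\<^sub>R X + v *\<^sub>R Y \<in> {(x, s). h x \<le> ereal s}"
  proof (cases "v = 0")
    case True then have "u = 1" using uv by simp
    then show ?thesis using True xs by simp
  next
    case False
    show ?thesis
    proof (cases "v = 1")
      case True then have "u = 0" using uv by simp
      then show ?thesis using True yt by simp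
    next
      case False2: False
      have v01: "0 < v" "v < 1" using uv False False2 by auto
      have u: "u = 1 - v" using uv by simp
      have "h ((1 - v) *\<^sub>R x + v *\<^sub>R y) \<le> ereal (1 - v) * h x + ereal v * h y"
        using cv v01 unfolding convex_fun_def by blast
      also have "\<dots> \<le> ereal (1 - v) * ereal s + ereal v * ereal t"
        by (intro add_mono ereal_mult_left_mono xs yt) (use v01 in auto)
      finally show ?thesis using xs yt u by simp
    qed
  qed
qed

lemma FM_point:
  fixes h :: "'a::euclidean_space \<Rightarrow> ereal"
  assumes cl: "closed_fun h" and cv: "convex_fun h" and pr: "proper_fun h"
    and z: "z \<in> subdiff (conj_fun h) u0"
  shows "h z \<le> ereal (inner u0 z) - conj_fun h u0"
proof (rule ccontr)
  assume nle: "\<not> ?thesis"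
  from z have fin: "\<bar>conj_fun h u0\<bar> \<noteq> \<infinity>" and sub: "\<And>v. conj_fun h u0 + ereal (inner z (v - u0)) \<le> conj_fun h v"
    unfolding subdiff_def by auto
  obtain c0 where c0: "conj_fun h u0 = ereal c0" using fin by (cases "conj_fun h u0") auto
  define \<beta> where "\<beta> = inner u0 z - c0"
  define S where "S = {(x, s::real). h x \<le> ereal s}"
  have zS: "(z, \<beta>) \<notin> S" using nle c0 unfolding S_def \<beta>_def by auto
  have "convex S" unfolding S_def by (rule epi_convex[OF cv])
  moreover have "closed S" using cl unfolding S_def closed_fun_def .
  ultimately obtain a b where ab: "inner a (z, \<beta>) < b" "\<forall>x\<in>S. b < inner a x"
    using separating_hyperplane_closed_point[OF _ _ zS] by blast
  obtain w s where a: "a = (w, s)" by (cases a)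
  have hz: "inner w z + s * \<beta> < b" using ab(1) a by (simp add: inner_Pair)
  have hS: "b < inner w y + s * t" if "h y \<le> ereal t" for y t
    using ab(2) that a unfolding S_def by (auto simp: inner_Pair)
  from pr obtain x1 where "h x1 \<noteq> \<infinity>" "h x1 \<noteq> -\<infinity>" unfolding proper_fun_def by auto
  then obtain t1 where t1: "h x1 = ereal t1" by (cases "h x1") auto
  have nm: "h y \<noteq> -\<infinity>" for y using pr unfolding proper_fun_def by auto
  have s0: "s \<ge> 0"
  proof (rule ccontr)
    assume "\<not> s \<ge> 0"
    then have s: "s < 0" by simp
    define q where "q = (inner w x1 - b) / (- s)"
    define t where "t = max t1 q"
    have "h x1 \<le> ereal t" using t1 unfolding t_def by simp
    then have hb: "b < inner w x1 + s * t" by (rule hS)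
    have "s * t \<le> s * q" using s unfolding t_def by (simp add: mult_left_mono_neg)
    also have "s * q = b - inner w x1" using s unfolding q_def by (simp add: field_simps)
    finally show False using hb by simp
  qed
  show False
  proof (cases "s = 0")
    case False
    then have s: "s > 0" using s0 by simp
    define v where "v = (- 1 / s) *\<^sub>R w"
    have A: "conj_fun h v \<le> ereal (- b / s)"
      unfolding conj_fun_def
    proof (rule SUP_least)
      fix y
      show "ereal (inner v y) - h y \<le> ereal (- b / s)"
      proof (cases "h y")
        case (real t)
        have "b < inner w y + s * t" using hS[of y t] real by simp
        have sv: "s * inner v y = - inner w y" using s unfolding v_def by simp
        have "s * (inner v y - t) = - inner w y - s * t" using sv by (simp add: right_diff_distrib)
        also have "\<dots> \<le> - b" using \<open>b < inner w y + s * t\<close> by simp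
        also have "- b = s * (- b / s)" using s by simp
        finally have "s * (inner v y - t) \<le> s * (- b / s)" .
        then have "inner v y - t \<le> - b / s" using mult_left_le_imp_le s by blast
        then show ?thesis using real by simp
      qed (use nm in auto)
    qed
    have B: "ereal (c0 + inner z (v - u0)) \<le> conj_fun h v" using sub[of v] c0 by simp
    have "c0 + inner z (v - u0) \<le> - b / s" using order_trans[OF B A] by simp
    moreover have "- b / s < inner v z - \<beta>"
    proof -
      have sv: "s * inner v z = - inner w z" using s unfolding v_def by simp
      have "s * (- b / s) = - b" using s by simp
      also have "\<dots> < - inner w z - s * \<beta>" using hz by simp
      also have "\<dots> = s * (inner v z - \<beta>)" using sv by (simp add: right_diff_distrib)
      finally have "s * (- b / s) < s * (inner v z - \<beta>)" .
      then show ?thesis using mult_left_less_imp_less s by (metis less_eq_real_def)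
    qed
    ultimately show False unfolding \<beta>_def by (simp add: inner_diff_right inner_commute)
  next
    case True
    define v where "v = u0 - w"
    have A: "conj_fun h v \<le> ereal (c0 - b)"
      unfolding conj_fun_def
    proof (rule SUP_least)
      fix y
      show "ereal (inner v y) - h y \<le> ereal (c0 - b)"
      proof (cases "h y")
        case (real t)
        have "b < inner w y" using hS[of y t] real True by simp
        moreover have "ereal (inner u0 y) - h y \<le> ereal c0" using conj_ge[where \<phi>=h and v=u0 and y=y] c0 by simp
        ultimately show ?thesis using real unfolding v_def by (simp add: inner_diff_left)
      qed (use nm in auto)
    qed
    have B: "ereal (c0 + inner z (v - u0)) \<le> conj_fun h v" using sub[of v] c0 by simp
    have "c0 + inner z (v - u0) \<le> c0 - b" using order_trans[OF B A] by simp
    then have "b \<le> inner w z" unfolding v_def by (simp add: inner_diff_right inner_commute)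
    then show False using hz True by simp
  qed
qed

lemma key_scalar:
  fixes \<gamma> \<tau> \<mu>g \<mu>h \<omega> \<omega>ran \<zeta> Q E A R KR eq kqa kqr ar :: real
  assumes g: "\<gamma> > 0" and t: "\<tau> > 0" and mg: "\<mu>g > 0" and mh: "\<mu>h > 0" and om: "\<omega> \<ge> 0"
    and Hg: "eq - \<gamma>*kqa - Q \<ge> \<gamma>*\<mu>g*Q"
    and Hh: "\<tau>*(kqa+kqr) - ar - R \<ge> \<tau>*\<mu>h*(A + 2*ar + R)"
    and HK: "\<gamma>*\<tau>*((1-\<zeta>)*KR + \<omega>ran*R) \<le> R"
    and CS: "0 \<le> (1+2*\<gamma>*\<mu>g)*(1+2*\<gamma>*\<mu>g)*Q - 2*(1+2*\<gamma>*\<mu>g)*eq + E"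
    and nn: "E \<ge> 0" "A \<ge> 0"
  shows "(1/\<gamma>)*(Q - 2*\<gamma>*kqr + \<gamma>*\<gamma>*KR) + (1+\<omega>)*(1/\<tau>+2*\<mu>h)*(A + 2*ar/(1+\<omega>) + R/((1+\<omega>)*(1+\<omega>)))
         + \<gamma>*(\<omega>ran*R - \<zeta>*KR) + (1+\<omega>)*(1/\<tau>+2*\<mu>h)/((1+\<omega>)*(1+\<omega>))*(\<omega>*R)
       \<le> max (1 / (1 + \<gamma> * \<mu>g)) (1 - 2 * \<tau> * \<mu>h / ((1 + \<omega>) * (1 + 2 * \<tau> * \<mu>h)))
           * ((1/\<gamma>)*E + (1+\<omega>)*(1/\<tau>+2*\<mu>h)*A)"
proof -
  define Lh where "Lh = 1/\<tau>+2*\<mu>h"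
  define cg where "cg = 1 / (1 + \<gamma> * \<mu>g)"
  define ch where "ch = 1 - 2 * \<tau> * \<mu>h / ((1 + \<omega>) * (1 + 2 * \<tau> * \<mu>h))"
  have o1: "1 + \<omega> > 0" using om by simp
  have gm: "\<gamma>*\<mu>g > 0" using g mg by simp
  have tm: "\<tau>*\<mu>h > 0" using t mh by simp
  have Lpos: "Lh > 0" using t mh unfolding Lh_def by (intro add_pos_pos) auto
  have h1: "(1+\<omega>)*Lh*(A + 2*ar/(1+\<omega>) + R/((1+\<omega>)*(1+\<omega>))) + (1+\<omega>)*Lh/((1+\<omega>)*(1+\<omega>))*(\<omega>*R)
      = \<omega>*(Lh*A) + Lh*(A + 2*ar + R)"
  proof -
    define ww1 where "ww1 = 1 + \<omega>"
    have o0: "ww1 \<noteq> 0" using o1 by (simp add: ww1_def)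
    have w: "\<omega> = ww1 - 1" by (simp add: ww1_def)
    show ?thesis unfolding ww1_def[symmetric] unfolding w using o0 by (simp add: field_simps)
  qed
  have h2: "(1/\<gamma>)*(Q - 2*\<gamma>*kqr + \<gamma>*\<gamma>*KR) = Q/\<gamma> - 2*kqr + \<gamma>*KR"
    using g by (simp add: field_simps)
  have h3: "Lh*(A + 2*ar + R) \<le> (A - R)/\<tau> + 2*(kqa + kqr)"
  proof -
    have "\<tau>*(Lh*(A + 2*ar + R)) = (A + 2*ar + R) + 2*(\<tau>*\<mu>h*(A + 2*ar + R))"
      using t by (simp add: Lh_def field_simps)
    also have "\<dots> \<le> (A + 2*ar + R) + 2*(\<tau>*(kqa+kqr) - ar - R)" using Hh by simp
    also have "\<dots> = \<tau>*((A - R)/\<tau> + 2*(kqa + kqr))" using t by (simp add: field_simps)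
    finally show ?thesis using t by simp
  qed
  have h4: "\<gamma>*(1-\<zeta>)*KR + \<gamma>*\<omega>ran*R \<le> R/\<tau>"
  proof -
    have "\<tau>*(\<gamma>*(1-\<zeta>)*KR + \<gamma>*\<omega>ran*R) \<le> \<tau>*(R/\<tau>)" using HK t by (simp add: algebra_simps)
    then show ?thesis using t mult_left_le_imp_le by blast
  qed
  have h5: "Q/\<gamma> + 2*kqa \<le> E/(\<gamma>*(1+2*\<gamma>*\<mu>g))"
  proof -
    define m where "m = 1+2*\<gamma>*\<mu>g"
    have m: "m > 0" using gm by (simp add: m_def)
    have "\<gamma>*kqa \<le> eq - Q - \<gamma>*\<mu>g*Q" using Hg by simp
    moreover have "\<gamma>*(Q/\<gamma> + 2*kqa) = Q + 2*(\<gamma>*kqa)" using g by (simp add: field_simps)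
    moreover have "2*eq - m*Q = 2*eq - Q - 2*(\<gamma>*\<mu>g*Q)" by (simp add: m_def algebra_simps)
    ultimately have "\<gamma>*(Q/\<gamma> + 2*kqa) \<le> 2*eq - m*Q" by argo
    also have "2*eq - m*Q \<le> E/m"
    proof -
      have "m*(2*eq - m*Q) \<le> E" using CS unfolding m_def[symmetric] by (simp add: algebra_simps)
      then show ?thesis using m by (simp add: field_simps)
    qed
    also have "E/m = \<gamma>*(E/(\<gamma>*m))" using g by simp
    finally have "\<gamma>*(Q/\<gamma> + 2*kqa) \<le> \<gamma>*(E/(\<gamma>*m))" .
    then have "Q/\<gamma> + 2*kqa \<le> E/(\<gamma>*m)" using g mult_left_le_imp_le by blast
    then show ?thesis unfolding m_def .
  qed
  have h6: "E/(\<gamma>*(1+2*\<gamma>*\<mu>g)) \<le> cg*((1/\<gamma>)*E)"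
  proof -
    have "1 + \<gamma>*\<mu>g \<le> 1+2*\<gamma>*\<mu>g" using gm by simp
    then have "1/(1+2*\<gamma>*\<mu>g) \<le> 1/(1 + \<gamma>*\<mu>g)" using gm by (intro divide_left_mono) auto
    then have "(1/(1+2*\<gamma>*\<mu>g)) * (E/\<gamma>) \<le> (1/(1 + \<gamma>*\<mu>g)) * (E/\<gamma>)" using nn g by (intro mult_right_mono) auto
    then show ?thesis unfolding cg_def by (simp add: mult.commute)
  qed
  have h7: "\<omega>*(Lh*A) + A/\<tau> = ch*((1+\<omega>)*Lh*A)"
  proof -
    define D where "D = (1 + \<omega>) * (1 + 2 * \<tau> * \<mu>h)"
    have D0: "D > 0" using o1 tm unfolding D_def by (intro mult_pos_pos) auto
    have e1: "(1+\<omega>)*Lh = D/\<tau>" using t by (simp add: Lh_def D_def field_simps)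
    have e3: "2*\<tau>*\<mu>h/D*(D/\<tau>) = 2*\<mu>h" using t D0 by simp
    have "ch*((1+\<omega>)*Lh*A) = (1+\<omega>)*Lh*A - (2*\<tau>*\<mu>h/D)*((1+\<omega>)*Lh)*A"
      unfolding ch_def D_def by (simp add: algebra_simps)
    also have "\<dots> = (1+\<omega>)*Lh*A - 2*\<mu>h*A" unfolding e1 e3 by simp
    also have "\<dots> = \<omega>*(Lh*A) + A/\<tau>" by (simp add: Lh_def algebra_simps add_divide_distrib)
    finally show ?thesis by simp
  qed
  have cge: "cg \<le> max cg ch" "ch \<le> max cg ch" by auto
  have pg: "(1/\<gamma>)*E \<ge> 0" using g nn by simp
  have ph: "(1+\<omega>)*Lh*A \<ge> 0" using o1 Lpos nn by simp
  have h8: "cg*((1/\<gamma>)*E) + ch*((1+\<omega>)*Lh*A) \<le> max cg ch * ((1/\<gamma>)*E) + max cg ch * ((1+\<omega>)*Lh*A)"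
    by (intro add_mono mult_right_mono cge pg ph)
  have h9: "max cg ch * ((1/\<gamma>)*E + (1+\<omega>)*Lh*A) = max cg ch * ((1/\<gamma>)*E) + max cg ch * ((1+\<omega>)*Lh*A)"
    by (simp add: distrib_left)
  have h10: "\<gamma>*(\<omega>ran*R - \<zeta>*KR) + \<gamma>*KR = \<gamma>*(1-\<zeta>)*KR + \<gamma>*\<omega>ran*R" by (simp add: algebra_simps)
  show ?thesis unfolding Lh_def[symmetric] cg_def[symmetric] ch_def[symmetric] h2
    using h1 h3 h4 h5 h6 h7 h8 h9 h10 by argo
qed

locale rpcp =
  fixes M :: "'w measure"
    and K :: "'x::euclidean_space \<Rightarrow> 'u::euclidean_space"
    and g :: "'x \<Rightarrow> ereal" and h :: "'u \<Rightarrow> ereal"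
    and \<mu>g \<mu>h \<gamma> \<tau> \<omega> \<omega>ran \<zeta> :: real
    and x0 :: 'x and u0 :: 'u
    and x xhat :: "nat \<Rightarrow> 'w \<Rightarrow> 'x" and u d :: "nat \<Rightarrow> 'w \<Rightarrow> 'u"
    and xs :: 'x and us :: 'u
  assumes M: "prob_space M"
    and K_lin: "linear K" and K_nz: "K \<noteq> (\<lambda>_. 0)"
    and g_pcc: "proper_fun g" "closed_fun g" "convex_fun g"
    and h_pcc: "proper_fun h" "closed_fun h" "convex_fun h"
    and g_sc: "strongly_convex \<mu>g g" and h_sc: "strongly_convex \<mu>h (conj_fun h)"
    and saddle_exists: "\<exists>xa ua. - adjoint K ua \<in> subdiff g xa \<and> K xa \<in> subdiff (conj_fun h) ua"
    and xs_primal: "\<forall>y. g xs + h (K xs) \<le> g y + h (K y)"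
    and us_dual: "\<forall>v. conj_fun g (- adjoint K us) + conj_fun h us
                       \<le> conj_fun g (- adjoint K v) + conj_fun h v"
    and \<mu>g_pos: "\<mu>g > 0" and \<mu>h_pos: "\<mu>h > 0"
    and \<gamma>_pos: "\<gamma> > 0" and \<tau>_pos: "\<tau> > 0" and \<omega>_nn: "\<omega> \<ge> 0"
    and \<omega>ran_nn: "\<omega>ran \<ge> 0" and \<zeta>_range: "0 \<le> \<zeta>" "\<zeta> \<le> 1"
    and step: "\<gamma> * \<tau> * ((1 - \<zeta>) * (onorm K)\<^sup>2 + \<omega>ran) \<le> 1"
    and init: "\<And>w. x 0 w = x0" "\<And>w. u 0 w = u0"
    and xhat_def: "\<And>t w. xhat t w = prox \<gamma> g (x t w - \<gamma> *\<^sub>R adjoint K (u t w))"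
    and u_rec: "\<And>t w. u (Suc t) w = u t w + (1 / (1 + \<omega>)) *\<^sub>R d t w"
    and x_rec: "\<And>t w. x (Suc t) w = xhat t w - \<gamma> *\<^sub>R adjoint K (d t w)"
    and d_meas: "\<And>t. d t \<in> borel_measurable M"
    and d_int: "\<And>t. integrable M (d t)"
    and d_unbiased: "\<And>t v. AE w in M.
          real_cond_exp M (gen_filtration M x u t) (\<lambda>w. inner v (d t w)) w
          = inner v (prox \<tau> (conj_fun h) (u t w + \<tau> *\<^sub>R K (xhat t w)) - u t w)"
    and d_var: "\<And>t. AE w in M.
          nn_cond_exp M (gen_filtration M x u t)
            (\<lambda>w. ennreal ((norm (d t w - (prox \<tau> (conj_fun h) (u t w + \<tau> *\<^sub>R K (xhat t w)) - u t w)))\<^sup>2)) w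
          \<le> ennreal (\<omega> * (norm (prox \<tau> (conj_fun h) (u t w + \<tau> *\<^sub>R K (xhat t w)) - u t w))\<^sup>2)"
    and d_var_K: "\<And>t. AE w in M.
          (let r = prox \<tau> (conj_fun h) (u t w + \<tau> *\<^sub>R K (xhat t w)) - u t w in
           0 \<le> \<omega>ran * (norm r)\<^sup>2 - \<zeta> * (norm (adjoint K r))\<^sup>2 \<and>
           nn_cond_exp M (gen_filtration M x u t)
             (\<lambda>w'. ennreal ((norm (adjoint K (d t w' -
                (prox \<tau> (conj_fun h) (u t w' + \<tau> *\<^sub>R K (xhat t w')) - u t w'))))\<^sup>2)) w
           \<le> ennreal (\<omega>ran * (norm r)\<^sup>2 - \<zeta> * (norm (adjoint K r))\<^sup>2))"


context rpcp
begin

lemma Klin: "linear K" by (rule K_lin)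
lemma Kbl: "bounded_linear K" using K_lin linear_conv_bounded_linear by blast
lemma adj_lin: "linear (adjoint K)" by (rule adjoint_linear[OF K_lin])
lemma adj_bl: "bounded_linear (adjoint K)" using adj_lin linear_conv_bounded_linear by blast
lemma adj_inner: "inner xx (adjoint K yy) = inner (K xx) yy" by (rule adjoint_works[OF K_lin])
lemma adj_inner': "inner (adjoint K yy) xx = inner yy (K xx)"
  using adj_inner[of xx yy] by (simp add: inner_commute)

lemma norm_adj: "norm (adjoint K r) \<le> onorm K * norm r"
proof -
  have "(norm (adjoint K r))\<^sup>2 = inner (K (adjoint K r)) r"
    using adj_inner[of "adjoint K r" r] by (simp add: power2_norm_eq_inner)
  also have "\<dots> \<le> norm (K (adjoint K r)) * norm r" by (rule norm_cauchy_schwarz)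
  also have "\<dots> \<le> onorm K * norm (adjoint K r) * norm r"
    by (intro mult_right_mono onorm[OF Kbl]) auto
  finally have "norm (adjoint K r) * norm (adjoint K r) \<le> (onorm K * norm r) * norm (adjoint K r)"
    by (simp add: power2_eq_square algebra_simps)
  then show ?thesis
    by (metis mult_le_cancel_right norm_ge_zero order_le_less mult_zero_left onorm_pos_le[OF Kbl] mult_nonneg_nonneg order_trans)
qed

lemma norm_K: "norm (K q) \<le> onorm K * norm q" by (rule onorm[OF Kbl])

lemma saddle_ids: "- adjoint K us \<in> subdiff g xs" "K xs \<in> subdiff (conj_fun h) us"
proof -
  obtain xa ua where sa: "- adjoint K ua \<in> subdiff g xa" and sb: "K xa \<in> subdiff (conj_fun h) ua"
    using saddle_exists by blast
  obtain ga where ga: "g xa = ereal ga" using sa unfolding subdiff_def by (cases "g xa") auto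
  obtain ha where ha: "conj_fun h ua = ereal ha" using sb unfolding subdiff_def by (cases "conj_fun h ua") auto
  have cga: "conj_fun g (- adjoint K ua) = ereal (inner (- adjoint K ua) xa - ga)"
    by (rule conj_FY_eq[OF sa ga])
  have dual_grow: "conj_fun g (- adjoint K v) + conj_fun h v \<ge>
      ereal ((inner (- adjoint K ua) xa - ga) + ha + \<mu>h/2 * (norm (v - ua))\<^sup>2)" for v
  proof -
    have A: "conj_fun g (- adjoint K v) \<ge> ereal (inner (- adjoint K v) xa - ga)"
      using conj_ge[where \<phi>=g and v="- adjoint K v" and y=xa] ga by simp
    have B: "conj_fun h v \<ge> ereal (ha + (inner (K xa) (v - ua) + \<mu>h/2 * (norm (v - ua))\<^sup>2))"
      using sg_growth[OF h_sc sb, of v] \<mu>h_pos ha by simp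
    have S: "conj_fun g (- adjoint K v) + conj_fun h v \<ge>
        ereal (inner (- adjoint K v) xa - ga) + ereal (ha + (inner (K xa) (v - ua) + \<mu>h/2 * (norm (v - ua))\<^sup>2))"
      by (rule add_mono[OF A B])
    have eq: "inner (- adjoint K v) xa - ga + (ha + (inner (K xa) (v - ua) + \<mu>h/2 * (norm (v - ua))\<^sup>2))
        = (inner (- adjoint K ua) xa - ga) + ha + \<mu>h/2 * (norm (v - ua))\<^sup>2"
      by (simp add: adj_inner adj_inner' inner_diff_right inner_commute algebra_simps)
    show ?thesis using S by (simp only: plus_ereal.simps(1) eq)
  qed
  have "conj_fun g (- adjoint K us) + conj_fun h us \<le> conj_fun g (- adjoint K ua) + conj_fun h ua"
    using us_dual by blast
  also have "\<dots> = ereal ((inner (- adjoint K ua) xa - ga) + ha)" using cga ha by simp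
  finally have "ereal ((inner (- adjoint K ua) xa - ga) + ha + \<mu>h/2 * (norm (us - ua))\<^sup>2)
      \<le> ereal ((inner (- adjoint K ua) xa - ga) + ha)" using dual_grow[of us] by (rule order_trans[rotated])
  then have "\<mu>h/2 * (norm (us - ua))\<^sup>2 \<le> 0" by simp
  then have usua: "us = ua" using \<mu>h_pos by (simp add: mult_le_0_iff)
  have FM: "h (K xa) \<le> ereal (inner ua (K xa)) - conj_fun h ua"
    by (rule FM_point[OF h_pcc(2) h_pcc(3) h_pcc(1) sb])
  have hnm: "h y \<noteq> -\<infinity>" for y using h_pcc(1) unfolding proper_fun_def by auto
  have hK: "h (K y) \<ge> ereal (inner ua (K y) - ha)" for y
  proof -
    have "conj_fun h ua \<ge> ereal (inner ua (K y)) - h (K y)" by (rule conj_ge)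
    then show ?thesis using ha hnm[of "K y"] by (cases "h (K y)") auto
  qed
  have Pgrow: "g y + h (K y) \<ge> ereal (ga + inner ua (K xa) - ha + \<mu>g/2 * (norm (y - xa))\<^sup>2)" for y
  proof -
    have A: "g y \<ge> ereal (ga + (inner (- adjoint K ua) (y - xa) + \<mu>g/2 * (norm (y - xa))\<^sup>2))"
      using sg_growth[OF g_sc sa, of y] \<mu>g_pos ga by simp
    have S: "g y + h (K y) \<ge> ereal (ga + (inner (- adjoint K ua) (y - xa) + \<mu>g/2 * (norm (y - xa))\<^sup>2)) + ereal (inner ua (K y) - ha)"
      by (rule add_mono[OF A hK])
    have eq: "ga + (inner (- adjoint K ua) (y - xa) + \<mu>g/2 * (norm (y - xa))\<^sup>2) + (inner ua (K y) - ha)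
        = ga + inner ua (K xa) - ha + \<mu>g/2 * (norm (y - xa))\<^sup>2"
      using linear_diff[OF K_lin, of y xa]
      by (simp add: adj_inner' inner_diff_right algebra_simps)
    show ?thesis using S by (simp only: plus_ereal.simps(1) eq)
  qed
  have "g xs + h (K xs) \<le> g xa + h (K xa)" using xs_primal by blast
  also have "\<dots> \<le> ereal ga + (ereal (inner ua (K xa)) - conj_fun h ua)" using ga FM by (intro add_mono) auto
  also have "\<dots> = ereal (ga + inner ua (K xa) - ha)" using ha by simp
  finally have "ereal (ga + inner ua (K xa) - ha + \<mu>g/2 * (norm (xs - xa))\<^sup>2) \<le> ereal (ga + inner ua (K xa) - ha)"
    using Pgrow[of xs] by (rule order_trans[rotated])
  then have "\<mu>g/2 * (norm (xs - xa))\<^sup>2 \<le> 0" by simp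
  then have xsxa: "xs = xa" using \<mu>g_pos by (simp add: mult_le_0_iff)
  show "- adjoint K us \<in> subdiff g xs" "K xs \<in> subdiff (conj_fun h) us" using sa sb xsxa usua by auto
qed

abbreviation "P \<equiv> prox \<gamma> g"
abbreviation "Q \<equiv> prox \<tau> (conj_fun h)"

lemma g_mu: "\<mu>g \<ge> 0" using \<mu>g_pos by simp
lemma h_mu: "\<mu>h \<ge> 0" using \<mu>h_pos by simp

lemmas P_mono = prox_strong_mono[OF g_sc g_mu g_pcc(2) saddle_ids(1) \<gamma>_pos]
lemmas Q_mono = prox_strong_mono[OF h_sc h_mu conj_closed saddle_ids(2) \<tau>_pos]
lemmas P_nonexp = prox_nonexp[OF g_sc g_mu g_pcc(2) saddle_ids(1) \<gamma>_pos]
lemmas Q_nonexp = prox_nonexp[OF h_sc h_mu conj_closed saddle_ids(2) \<tau>_pos]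

lemma P_fix: "P (xs - \<gamma> *\<^sub>R adjoint K us) = xs"
  by (rule prox_of_subgrad[OF g_sc g_mu g_pcc(2) saddle_ids(1) \<gamma>_pos]) (use saddle_ids(1) \<gamma>_pos in simp)

lemma Q_fix: "Q (us + \<tau> *\<^sub>R K xs) = us"
  by (rule prox_of_subgrad[OF h_sc h_mu conj_closed saddle_ids(2) \<tau>_pos]) (use saddle_ids(2) \<tau>_pos in simp)


lemma nexp1: fixes X V :: "'a::real_inner"
  shows "(norm (X - c *\<^sub>R V))\<^sup>2 = (norm X)\<^sup>2 - 2*c*inner X V + c*c*(norm V)\<^sup>2"
  by (simp add: power2_norm_eq_inner inner_diff_left inner_diff_right inner_commute algebra_simps)
lemma nexp2: fixes B D :: "'a::real_inner"
  shows "(norm (B + c *\<^sub>R D))\<^sup>2 = (norm B)\<^sup>2 + 2*c*inner B D + c*c*(norm D)\<^sup>2"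
  by (simp add: power2_norm_eq_inner inner_add_left inner_add_right inner_commute algebra_simps)

definition "rr t w = Q (u t w + \<tau> *\<^sub>R K (xhat t w)) - u t w"
definition "dl t w = d t w - rr t w"
definition "Xv t w = xhat t w - xs - \<gamma> *\<^sub>R adjoint K (rr t w)"
definition "Bv t w = u t w - us + (1 / (1 + \<omega>)) *\<^sub>R rr t w"
definition "Phi t w = 1 / \<gamma> * (norm (Xv t w))\<^sup>2 + (1 + \<omega>) * (1 / \<tau> + 2 * \<mu>h) * (norm (Bv t w))\<^sup>2"
definition "Yv t w = (- 2) *\<^sub>R K (Xv t w) + (2 * (1 / \<tau> + 2 * \<mu>h)) *\<^sub>R Bv t w"
definition "Psi t w = 1 / \<gamma> * (norm (x t w - xs))\<^sup>2 + (1 + \<omega>) * (1 / \<tau> + 2 * \<mu>h) * (norm (u t w - us))\<^sup>2"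
definition "cc = max (1 / (1 + \<gamma> * \<mu>g)) (1 - 2 * \<tau> * \<mu>h / ((1 + \<omega>) * (1 + 2 * \<tau> * \<mu>h)))"

lemma decomp:
  "Psi (Suc t) w = Phi t w + inner (Yv t w) (dl t w) + \<gamma> * (norm (adjoint K (dl t w)))\<^sup>2
     + (1 + \<omega>) * (1 / \<tau> + 2 * \<mu>h) / ((1 + \<omega>) * (1 + \<omega>)) * (norm (dl t w))\<^sup>2"
proof -
  define Cq where "Cq = (1 + \<omega>) * (1 / \<tau> + 2 * \<mu>h)"
  define sq where "sq = 1 / (1 + \<omega>)"
  have o1: "1 + \<omega> > 0" using \<omega>_nn by simp
  have dsplit: "d t w = rr t w + dl t w" by (simp add: dl_def)
  have ex: "x (Suc t) w - xs = Xv t w - \<gamma> *\<^sub>R adjoint K (dl t w)"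
    unfolding x_rec Xv_def dsplit linear_add[OF adj_lin] by (simp add: algebra_simps)
  have eu: "u (Suc t) w - us = Bv t w + sq *\<^sub>R dl t w"
    unfolding u_rec Bv_def dsplit sq_def by (simp add: algebra_simps)
  have Cs: "Cq * sq = 1 / \<tau> + 2 * \<mu>h" unfolding Cq_def sq_def using o1 by simp
  have Css: "Cq * (sq * sq) = (1 + \<omega>) * (1 / \<tau> + 2 * \<mu>h) / ((1 + \<omega>) * (1 + \<omega>))" unfolding Cq_def sq_def by simp
  have i1: "inner (Xv t w) (adjoint K (dl t w)) = inner (K (Xv t w)) (dl t w)" by (rule adj_inner)
  have "Psi (Suc t) w = 1 / \<gamma> * (norm (Xv t w - \<gamma> *\<^sub>R adjoint K (dl t w)))\<^sup>2 + Cq * (norm (Bv t w + sq *\<^sub>R dl t w))\<^sup>2"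
    unfolding Psi_def ex eu Cq_def ..
  also have "\<dots> = 1 / \<gamma> * ((norm (Xv t w))\<^sup>2 - 2*\<gamma>*inner (Xv t w) (adjoint K (dl t w)) + \<gamma>*\<gamma>*(norm (adjoint K (dl t w)))\<^sup>2)
      + Cq * ((norm (Bv t w))\<^sup>2 + 2 * sq * inner (Bv t w) (dl t w) + sq * sq * (norm (dl t w))\<^sup>2)"
    unfolding nexp1 nexp2 ..
  also have "\<dots> = 1 / \<gamma> * (norm (Xv t w))\<^sup>2 + Cq * (norm (Bv t w))\<^sup>2
      + ((- 2) * inner (K (Xv t w)) (dl t w) + 2 * (Cq * sq) * inner (Bv t w) (dl t w))
      + \<gamma> * (norm (adjoint K (dl t w)))\<^sup>2 + Cq * (sq * sq) * (norm (dl t w))\<^sup>2"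
    using \<gamma>_pos unfolding i1 by (simp add: field_simps)
  also have "(- 2) * inner (K (Xv t w)) (dl t w) + 2 * (Cq * sq) * inner (Bv t w) (dl t w) = inner (Yv t w) (dl t w)"
    unfolding Yv_def Cs by (simp add: inner_add_left inner_diff_left)
  finally show ?thesis unfolding Phi_def Cq_def[symmetric] Css .
qed

lemma key_vec:
  "Phi t w + \<gamma> * (\<omega>ran * (norm (rr t w))\<^sup>2 - \<zeta> * (norm (adjoint K (rr t w)))\<^sup>2)
     + (1 + \<omega>) * (1 / \<tau> + 2 * \<mu>h) / ((1 + \<omega>) * (1 + \<omega>)) * (\<omega> * (norm (rr t w))\<^sup>2)
   \<le> cc * Psi t w"
proof -
  define e where "e = x t w - xs"
  define a where "a = u t w - us"
  define q where "q = xhat t w - xs"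
  define r where "r = rr t w"
  have o1: "1 + \<omega> > 0" using \<omega>_nn by simp
  have Hg0: "inner ((e - \<gamma> *\<^sub>R adjoint K a) - q) q \<ge> \<gamma> * \<mu>g * (norm q)\<^sup>2"
  proof -
    have "inner (((x t w - \<gamma> *\<^sub>R adjoint K (u t w)) - P (x t w - \<gamma> *\<^sub>R adjoint K (u t w)))
                 - ((xs - \<gamma> *\<^sub>R adjoint K us) - P (xs - \<gamma> *\<^sub>R adjoint K us)))
               (P (x t w - \<gamma> *\<^sub>R adjoint K (u t w)) - P (xs - \<gamma> *\<^sub>R adjoint K us))
          \<ge> \<gamma> * \<mu>g * (norm (P (x t w - \<gamma> *\<^sub>R adjoint K (u t w)) - P (xs - \<gamma> *\<^sub>R adjoint K us)))\<^sup>2"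
      by (rule P_mono)
    moreover have "adjoint K (u t w) - adjoint K us = adjoint K a" unfolding a_def linear_diff[OF adj_lin] ..
    ultimately show ?thesis unfolding P_fix xhat_def[symmetric] e_def q_def
      by (simp add: algebra_simps scaleR_diff_right[symmetric])
  qed
  have Hh0: "inner (\<tau> *\<^sub>R K q - r) (a + r) \<ge> \<tau> * \<mu>h * (norm (a + r))\<^sup>2"
  proof -
    have "inner (((u t w + \<tau> *\<^sub>R K (xhat t w)) - Q (u t w + \<tau> *\<^sub>R K (xhat t w)))
                 - ((us + \<tau> *\<^sub>R K xs) - Q (us + \<tau> *\<^sub>R K xs)))
               (Q (u t w + \<tau> *\<^sub>R K (xhat t w)) - Q (us + \<tau> *\<^sub>R K xs))
          \<ge> \<tau> * \<mu>h * (norm (Q (u t w + \<tau> *\<^sub>R K (xhat t w)) - Q (us + \<tau> *\<^sub>R K xs)))\<^sup>2"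
      by (rule Q_mono)
    moreover have "Q (u t w + \<tau> *\<^sub>R K (xhat t w)) = r + u t w" unfolding r_def rr_def by simp
    moreover have "K (xhat t w) - K xs = K q" unfolding q_def linear_diff[OF K_lin] ..
    ultimately show ?thesis unfolding Q_fix a_def
      by (simp add: algebra_simps scaleR_diff_right[symmetric])
  qed
  define E where "E = (norm e)\<^sup>2"
  define A where "A = (norm a)\<^sup>2"
  define Qn where "Qn = (norm q)\<^sup>2"
  define R where "R = (norm r)\<^sup>2"
  define KR where "KR = (norm (adjoint K r))\<^sup>2"
  define eq where "eq = inner e q"
  define kqa where "kqa = inner (K q) a"
  define kqr where "kqr = inner (K q) r"
  define ar where "ar = inner a r"
  have Hg: "eq - \<gamma>*kqa - Qn \<ge> \<gamma>*\<mu>g*Qn"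
  proof -
    have "inner ((e - \<gamma> *\<^sub>R adjoint K a) - q) q = inner e q - \<gamma> * inner (adjoint K a) q - inner q q"
      by (simp add: inner_diff_left)
    also have "inner (adjoint K a) q = kqa" unfolding kqa_def adj_inner' by (simp add: inner_commute)
    finally have "inner ((e - \<gamma> *\<^sub>R adjoint K a) - q) q = eq - \<gamma>*kqa - Qn"
      unfolding eq_def Qn_def by (simp add: power2_norm_eq_inner)
    then show ?thesis using Hg0 unfolding Qn_def by simp
  qed
  have Hh: "\<tau>*(kqa+kqr) - ar - R \<ge> \<tau>*\<mu>h*(A + 2*ar + R)"
  proof -
    have "inner (\<tau> *\<^sub>R K q - r) (a + r) = \<tau>*(kqa+kqr) - ar - R"
      unfolding kqa_def kqr_def ar_def R_def
      by (simp add: inner_diff_left inner_add_right power2_norm_eq_inner inner_commute algebra_simps)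
    moreover have "(norm (a + r))\<^sup>2 = A + 2*ar + R" unfolding A_def ar_def R_def
      using nexp2[of a 1 r] by simp
    ultimately show ?thesis using Hh0 by simp
  qed
  have HK: "\<gamma>*\<tau>*((1-\<zeta>)*KR + \<omega>ran*R) \<le> R"
  proof -
    have "norm (adjoint K r) \<le> onorm K * norm r" by (rule norm_adj)
    then have "KR \<le> (onorm K)\<^sup>2 * R" unfolding KR_def R_def
      by (metis norm_ge_zero power_mono power_mult_distrib)
    then have "(1-\<zeta>)*KR \<le> (1-\<zeta>)*((onorm K)\<^sup>2 * R)" using \<zeta>_range by (intro mult_left_mono) auto
    then have "(1-\<zeta>)*KR + \<omega>ran*R \<le> ((1-\<zeta>)*(onorm K)\<^sup>2 + \<omega>ran) * R" by (simp add: algebra_simps)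
    then have "\<gamma>*\<tau>*((1-\<zeta>)*KR + \<omega>ran*R) \<le> \<gamma>*\<tau>*(((1-\<zeta>)*(onorm K)\<^sup>2 + \<omega>ran) * R)"
      using \<gamma>_pos \<tau>_pos by (intro mult_left_mono) auto
    also have "\<dots> = (\<gamma>*\<tau>*((1-\<zeta>)*(onorm K)\<^sup>2 + \<omega>ran)) * R" by simp
    also have "\<dots> \<le> 1 * R" using step unfolding R_def by (intro mult_right_mono) auto
    finally show ?thesis by simp
  qed
  have CS: "0 \<le> (1+2*\<gamma>*\<mu>g)*(1+2*\<gamma>*\<mu>g)*Qn - 2*(1+2*\<gamma>*\<mu>g)*eq + E"
  proof -
    have "0 \<le> (norm ((1+2*\<gamma>*\<mu>g) *\<^sub>R q - e))\<^sup>2" by simp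
    also have "\<dots> = (1+2*\<gamma>*\<mu>g)*(1+2*\<gamma>*\<mu>g)*Qn - 2*(1+2*\<gamma>*\<mu>g)*eq + E"
      unfolding Qn_def eq_def E_def
      by (simp add: power2_norm_eq_inner inner_diff_left inner_diff_right inner_commute algebra_simps)
    finally show ?thesis .
  qed
  have nn: "E \<ge> 0" "A \<ge> 0" unfolding E_def A_def by simp_all
  note ks = key_scalar[OF \<gamma>_pos \<tau>_pos \<mu>g_pos \<mu>h_pos \<omega>_nn Hg Hh HK CS nn]
  have X2: "(norm (Xv t w))\<^sup>2 = Qn - 2*\<gamma>*kqr + \<gamma>*\<gamma>*KR"
  proof -
    have e: "Xv t w = q - \<gamma> *\<^sub>R adjoint K r" unfolding Xv_def q_def r_def ..
    show ?thesis by (simp only: e nexp1 adj_inner Qn_def kqr_def KR_def)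
  qed
  have B2: "(norm (Bv t w))\<^sup>2 = A + 2*ar/(1+\<omega>) + R/((1+\<omega>)*(1+\<omega>))"
  proof -
    have e: "Bv t w = a + (1/(1+\<omega>)) *\<^sub>R r" unfolding Bv_def a_def r_def ..
    show ?thesis unfolding e nexp2 A_def ar_def R_def by simp
  qed
  have "Phi t w + \<gamma> * (\<omega>ran * (norm (rr t w))\<^sup>2 - \<zeta> * (norm (adjoint K (rr t w)))\<^sup>2)
     + (1 + \<omega>) * (1 / \<tau> + 2 * \<mu>h) / ((1 + \<omega>) * (1 + \<omega>)) * (\<omega> * (norm (rr t w))\<^sup>2)
     = (1/\<gamma>)*(Qn - 2*\<gamma>*kqr + \<gamma>*\<gamma>*KR) + (1+\<omega>)*(1/\<tau>+2*\<mu>h)*(A + 2*ar/(1+\<omega>) + R/((1+\<omega>)*(1+\<omega>)))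
         + \<gamma>*(\<omega>ran*R - \<zeta>*KR) + (1+\<omega>)*(1/\<tau>+2*\<mu>h)/((1+\<omega>)*(1+\<omega>))*(\<omega>*R)"
    unfolding Phi_def X2 B2 R_def KR_def r_def ..
  also have "\<dots> \<le> cc * ((1/\<gamma>)*E + (1+\<omega>)*(1/\<tau>+2*\<mu>h)*A)" using ks unfolding cc_def .
  also have "(1/\<gamma>)*E + (1+\<omega>)*(1/\<tau>+2*\<mu>h)*A = Psi t w" unfolding Psi_def E_def A_def e_def a_def by simp
  finally show ?thesis .
qed


lemma P_cont: "continuous_on UNIV P"
  by (rule lipschitz_on_continuous_on[of 1]) (auto intro!: lipschitz_onI simp: dist_norm P_nonexp)
lemma Q_cont: "continuous_on UNIV Q"
  by (rule lipschitz_on_continuous_on[of 1]) (auto intro!: lipschitz_onI simp: dist_norm Q_nonexp)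

lemma P_meas[measurable]: "P \<in> borel_measurable borel" by (rule borel_measurable_continuous_onI[OF P_cont])
lemma Q_meas[measurable]: "Q \<in> borel_measurable borel" by (rule borel_measurable_continuous_onI[OF Q_cont])
lemma K_meas[measurable]: "K \<in> borel_measurable borel"
  by (rule borel_measurable_continuous_onI) (simp add: linear_continuous_on Kbl)
lemma adj_meas[measurable]: "adjoint K \<in> borel_measurable borel"
  by (rule borel_measurable_continuous_onI) (simp add: linear_continuous_on adj_bl)

lemma xu_meas: "x t \<in> borel_measurable M \<and> u t \<in> borel_measurable M"
proof (induction t)
  case 0 then show ?case by (simp add: init)
next
  case (Suc t)
  then have [measurable]: "x t \<in> borel_measurable M" "u t \<in> borel_measurable M" by auto
  have [measurable]: "d t \<in> borel_measurable M" by (rule d_meas)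
  have [measurable]: "xhat t \<in> borel_measurable M" unfolding xhat_def[abs_def] by measurable
  have "x (Suc t) = (\<lambda>w. xhat t w - \<gamma> *\<^sub>R adjoint K (d t w))" using x_rec by auto
  moreover have "u (Suc t) = (\<lambda>w. u t w + (1 / (1 + \<omega>)) *\<^sub>R d t w)" using u_rec by auto
  ultimately show ?case by simp
qed

lemma x_meas[measurable]: "x t \<in> borel_measurable M" using xu_meas by blast
lemma u_meas[measurable]: "u t \<in> borel_measurable M" using xu_meas by blast
lemma xhat_meas[measurable]: "xhat t \<in> borel_measurable M" unfolding xhat_def[abs_def] by measurable
lemma rr_meas[measurable]: "rr t \<in> borel_measurable M" unfolding rr_def[abs_def] by measurable

abbreviation "FF t \<equiv> gen_filtration M x u t"

lemma gens_sub: "((\<Union>s\<le>t. {x s -` A \<inter> space M | A. A \<in> sets borel}) \<union> (\<Union>s\<le>t. {u s -` B \<inter> space M | B. B \<in> sets borel})) \<subseteq> sets M"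
  by auto

lemma FF_space[simp]: "space (FF t) = space M"
  unfolding gen_filtration_def by (rule space_measure_of) (use sets.sets_into_space gens_sub in blast)

lemma FF_sets: "sets (FF t) = sigma_sets (space M) ((\<Union>s\<le>t. {x s -` A \<inter> space M | A. A \<in> sets borel}) \<union> (\<Union>s\<le>t. {u s -` B \<inter> space M | B. B \<in> sets borel}))"
  unfolding gen_filtration_def by (rule sets_measure_of) (use sets.sets_into_space gens_sub in blast)

lemma FF_subalg: "subalgebra M (FF t)"
  unfolding subalgebra_def
proof
  show "space (FF t) = space M" by simp
  show "sets (FF t) \<subseteq> sets M" unfolding FF_sets by (rule sets.sigma_sets_subset[OF gens_sub])
qed

lemma x_FF[measurable]: "s \<le> t \<Longrightarrow> x s \<in> borel_measurable (FF t)"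
  by (rule measurableI) (auto simp: FF_sets intro!: sigma_sets.Basic)
lemma u_FF[measurable]: "s \<le> t \<Longrightarrow> u s \<in> borel_measurable (FF t)"
  by (rule measurableI) (auto simp: FF_sets intro!: sigma_sets.Basic)

lemma FF_fms: "finite_measure_subalgebra M (FF t)"
proof -
  interpret prob_space M by (rule M)
  show ?thesis by (unfold_locales) (rule FF_subalg)
qed

lemma FF_sfs: "sigma_finite_subalgebra M (FF t)"
  using FF_fms finite_measure_subalgebra_is_sigma_finite by blast

lemma xhat_FF[measurable]: "xhat t \<in> borel_measurable (FF t)" unfolding xhat_def[abs_def] by measurable
lemma rr_FF[measurable]: "rr t \<in> borel_measurable (FF t)" unfolding rr_def[abs_def] by measurable
lemma Xv_FF[measurable]: "Xv t \<in> borel_measurable (FF t)" unfolding Xv_def[abs_def] by measurable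
lemma Bv_FF[measurable]: "Bv t \<in> borel_measurable (FF t)" unfolding Bv_def[abs_def] by measurable
lemma Yv_FF[measurable]: "Yv t \<in> borel_measurable (FF t)" unfolding Yv_def[abs_def] by measurable
lemma Phi_FF[measurable]: "Phi t \<in> borel_measurable (FF t)" unfolding Phi_def[abs_def] by measurable
lemma Psi_FF[measurable]: "Psi t \<in> borel_measurable (FF t)" unfolding Psi_def[abs_def] by measurable

lemma FF_M: "f \<in> borel_measurable (FF t) \<Longrightarrow> f \<in> borel_measurable M"
  using measurable_from_subalg[OF FF_subalg] by blast

lemma Xv_meas[measurable]: "Xv t \<in> borel_measurable M" by (rule FF_M) measurable
lemma Bv_meas[measurable]: "Bv t \<in> borel_measurable M" by (rule FF_M) measurable
lemma Yv_meas[measurable]: "Yv t \<in> borel_measurable M" by (rule FF_M) measurable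
lemma Phi_meas[measurable]: "Phi t \<in> borel_measurable M" by (rule FF_M) measurable
lemma Psi_meas[measurable]: "Psi t \<in> borel_measurable M" by (rule FF_M) measurable
lemma dl_meas[measurable]: "dl t \<in> borel_measurable M" unfolding dl_def[abs_def] by (intro borel_measurable_diff d_meas rr_meas)


definition "Nt t w = norm (x t w - xs) + norm (u t w - us)"

lemma onK_nn: "onorm K \<ge> 0" by (rule onorm_pos_le[OF Kbl])

lemma bounds: "\<exists>L\<ge>0. \<forall>t w. norm (rr t w) \<le> L * Nt t w \<and> norm (adjoint K (rr t w)) \<le> L * Nt t w
   \<and> norm (Xv t w) \<le> L * Nt t w \<and> norm (Bv t w) \<le> L * Nt t w \<and> norm (Yv t w) \<le> L * Nt t w"
proof -
  define k where "k = onorm K"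
  have k0: "k \<ge> 0" unfolding k_def by (rule onK_nn)
  define Lh where "Lh = 1 / \<tau> + 2 * \<mu>h"
  have Lh0: "Lh \<ge> 0" unfolding Lh_def using \<tau>_pos \<mu>h_pos by simp
  define L1 where "L1 = 1 + \<gamma> * k"
  define L2 where "L2 = 2 + \<tau> * k * L1"
  define L3 where "L3 = L1 + \<gamma> * k * L2"
  define L4 where "L4 = 1 + L2"
  define L5 where "L5 = 2 * k * L3 + 2 * Lh * L4"
  have pos: "L1 \<ge> 0" "L2 \<ge> 0" "L3 \<ge> 0" "L4 \<ge> 0" "L5 \<ge> 0" "k * L2 \<ge> 0"
    unfolding L1_def L2_def L3_def L4_def L5_def using k0 Lh0 \<gamma>_pos \<tau>_pos by auto
  define L where "L = L2 + k * L2 + L3 + L4 + L5"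
  have L0: "L \<ge> 0" unfolding L_def using pos by simp
  have main: "norm (rr t w) \<le> L2 * Nt t w \<and> norm (adjoint K (rr t w)) \<le> (k * L2) * Nt t w
   \<and> norm (Xv t w) \<le> L3 * Nt t w \<and> norm (Bv t w) \<le> L4 * Nt t w \<and> norm (Yv t w) \<le> L5 * Nt t w" for t w
  proof -
    define ne where "ne = norm (x t w - xs)"
    define na where "na = norm (u t w - us)"
    have N: "Nt t w = ne + na" unfolding Nt_def ne_def na_def ..
    have ne0: "ne \<ge> 0" and na0: "na \<ge> 0" unfolding ne_def na_def by simp_all
    have q: "norm (xhat t w - xs) \<le> L1 * Nt t w"
    proof -
      have "norm (xhat t w - xs) \<le> norm ((x t w - \<gamma> *\<^sub>R adjoint K (u t w)) - (xs - \<gamma> *\<^sub>R adjoint K us))"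
        using P_nonexp[of "x t w - \<gamma> *\<^sub>R adjoint K (u t w)" "xs - \<gamma> *\<^sub>R adjoint K us"]
        unfolding P_fix xhat_def[symmetric] .
      also have "(x t w - \<gamma> *\<^sub>R adjoint K (u t w)) - (xs - \<gamma> *\<^sub>R adjoint K us) = (x t w - xs) - \<gamma> *\<^sub>R adjoint K (u t w - us)"
        by (simp add: linear_diff[OF adj_lin] algebra_simps)
      also have "norm \<dots> \<le> ne + \<gamma> * norm (adjoint K (u t w - us))"
        unfolding ne_def using norm_triangle_ineq4[of "x t w - xs" "\<gamma> *\<^sub>R adjoint K (u t w - us)"] \<gamma>_pos by simp
      also have "\<dots> \<le> ne + \<gamma> * (k * na)" unfolding k_def na_def using norm_adj \<gamma>_pos by (intro add_left_mono mult_left_mono) auto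
      also have "\<dots> \<le> L1 * Nt t w" unfolding L1_def N using ne0 na0 k0 \<gamma>_pos
        by (simp add: algebra_simps mult_nonneg_nonneg)
      finally show ?thesis .
    qed
    have r: "norm (rr t w) \<le> L2 * Nt t w"
    proof -
      have "norm (Q (u t w + \<tau> *\<^sub>R K (xhat t w)) - us) \<le> norm ((u t w + \<tau> *\<^sub>R K (xhat t w)) - (us + \<tau> *\<^sub>R K xs))"
        using Q_nonexp[of "u t w + \<tau> *\<^sub>R K (xhat t w)" "us + \<tau> *\<^sub>R K xs"] unfolding Q_fix .
      also have "(u t w + \<tau> *\<^sub>R K (xhat t w)) - (us + \<tau> *\<^sub>R K xs) = (u t w - us) + \<tau> *\<^sub>R K (xhat t w - xs)"
        by (simp add: linear_diff[OF K_lin] algebra_simps)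
      also have "norm \<dots> \<le> na + \<tau> * norm (K (xhat t w - xs))"
        unfolding na_def using norm_triangle_ineq[of "u t w - us" "\<tau> *\<^sub>R K (xhat t w - xs)"] \<tau>_pos by simp
      also have "\<dots> \<le> na + \<tau> * (k * (L1 * Nt t w))"
        using norm_K[of "xhat t w - xs"] q k0 \<tau>_pos unfolding k_def
        by (intro add_left_mono mult_left_mono) (auto intro: order_trans mult_left_mono)
      finally have A: "norm (Q (u t w + \<tau> *\<^sub>R K (xhat t w)) - us) \<le> na + \<tau> * (k * (L1 * Nt t w))" .
      have "rr t w = (Q (u t w + \<tau> *\<^sub>R K (xhat t w)) - us) - (u t w - us)" unfolding rr_def by simp
      then have "norm (rr t w) \<le> norm (Q (u t w + \<tau> *\<^sub>R K (xhat t w)) - us) + na"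
        unfolding na_def using norm_triangle_ineq4 by metis
      also have "\<dots> \<le> na + \<tau> * (k * (L1 * Nt t w)) + na" using A by simp
      also have "\<dots> \<le> L2 * Nt t w" unfolding L2_def N using ne0 na0 k0 \<tau>_pos pos(1)
        by (simp add: algebra_simps mult_nonneg_nonneg)
      finally show ?thesis .
    qed
    have kr: "norm (adjoint K (rr t w)) \<le> (k * L2) * Nt t w"
      using norm_adj[of "rr t w"] r k0 unfolding k_def
      by (metis (no_types, opaque_lifting) mult.assoc mult_left_mono order_trans)
    have X: "norm (Xv t w) \<le> L3 * Nt t w"
    proof -
      have "norm (Xv t w) \<le> norm (xhat t w - xs) + \<gamma> * norm (adjoint K (rr t w))"
        unfolding Xv_def using norm_triangle_ineq4[of "xhat t w - xs" "\<gamma> *\<^sub>R adjoint K (rr t w)"] \<gamma>_pos by simp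
      also have "\<dots> \<le> L1 * Nt t w + \<gamma> * ((k * L2) * Nt t w)" using q kr \<gamma>_pos by (intro add_mono mult_left_mono) auto
      also have "\<dots> = L3 * Nt t w" unfolding L3_def by (simp add: algebra_simps)
      finally show ?thesis .
    qed
    have B: "norm (Bv t w) \<le> L4 * Nt t w"
    proof -
      have o1: "1 + \<omega> \<ge> 1" using \<omega>_nn by simp
      have "norm (Bv t w) \<le> na + norm ((1 / (1 + \<omega>)) *\<^sub>R rr t w)"
        unfolding Bv_def na_def by (rule norm_triangle_ineq)
      also have "norm ((1 / (1 + \<omega>)) *\<^sub>R rr t w) \<le> norm (rr t w)"
        using o1 by (simp add: divide_le_eq_1 mult_le_cancel_right1 field_simps)
      finally have "norm (Bv t w) \<le> na + L2 * Nt t w" using r by simp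
      also have "\<dots> \<le> L4 * Nt t w" unfolding L4_def N using ne0 by (simp add: algebra_simps)
      finally show ?thesis .
    qed
    have Y: "norm (Yv t w) \<le> L5 * Nt t w"
    proof -
      have "norm (Yv t w) \<le> norm ((- 2) *\<^sub>R K (Xv t w)) + norm ((2 * Lh) *\<^sub>R Bv t w)"
        unfolding Yv_def Lh_def by (rule norm_triangle_ineq)
      also have "\<dots> = 2 * norm (K (Xv t w)) + 2 * Lh * norm (Bv t w)" using Lh0 by simp
      also have "\<dots> \<le> 2 * (k * (L3 * Nt t w)) + 2 * Lh * (L4 * Nt t w)"
        using norm_K[of "Xv t w"] X B k0 Lh0 unfolding k_def
        by (intro add_mono mult_left_mono) (auto intro: order_trans mult_left_mono)
      also have "\<dots> = L5 * Nt t w" unfolding L5_def by (simp add: algebra_simps)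
      finally show ?thesis .
    qed
    show ?thesis using r kr X B Y by blast
  qed
  have Nn: "Nt t w \<ge> 0" for t w unfolding Nt_def by simp
  have le: "a * Nt t w \<le> L * Nt t w" if "a \<le> L" for a t w using that Nn by (simp add: mult_right_mono)
  have "L2 \<le> L" "k * L2 \<le> L" "L3 \<le> L" "L4 \<le> L" "L5 \<le> L" unfolding L_def using pos by auto
  then show ?thesis using main L0 le by (meson order_trans)
qed

lemma N2_Psi: "(Nt t w)\<^sup>2 \<le> 2 * (\<gamma> + 1 / ((1 + \<omega>) * (1 / \<tau> + 2 * \<mu>h))) * Psi t w"
proof -
  define C where "C = (1 + \<omega>) * (1 / \<tau> + 2 * \<mu>h)"
  have C0: "C > 0"
  proof -
    have "1 + \<omega> > 0" using \<omega>_nn by simp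
    moreover have "1 / \<tau> + 2 * \<mu>h > 0" using \<tau>_pos \<mu>h_pos by (intro add_pos_pos) auto
    ultimately show ?thesis unfolding C_def by simp
  qed
  define E where "E = (norm (x t w - xs))\<^sup>2"
  define A where "A = (norm (u t w - us))\<^sup>2"
  have E0: "E \<ge> 0" and A0: "A \<ge> 0" unfolding E_def A_def by simp_all
  have Ps: "Psi t w = E / \<gamma> + C * A" unfolding Psi_def E_def A_def C_def by simp
  have "(Nt t w)\<^sup>2 \<le> 2 * E + 2 * A"
    unfolding Nt_def E_def A_def
    by (smt (verit, best) power2_sum sum_squares_bound norm_ge_zero)
  also have "E \<le> \<gamma> * Psi t w"
  proof -
    have "E = \<gamma> * (E / \<gamma>)" using \<gamma>_pos by simp
    also have "\<dots> \<le> \<gamma> * Psi t w" unfolding Ps using \<gamma>_pos C0 A0 by (intro mult_left_mono) auto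
    finally show ?thesis .
  qed
  also have "A \<le> (1 / C) * Psi t w"
  proof -
    have "A = (1 / C) * (C * A)" using C0 by simp
    also have "\<dots> \<le> (1 / C) * Psi t w" unfolding Ps using \<gamma>_pos C0 E0 by (intro mult_left_mono) auto
    finally show ?thesis .
  qed
  finally show ?thesis unfolding C_def[symmetric] by (simp add: algebra_simps)
qed

end


context rpcp
begin

lemma int_from_N2:
  assumes iP: "integrable M (Psi t)" and fm: "f \<in> borel_measurable M" and c0: "c \<ge> 0"
    and b: "\<And>w. \<bar>f w\<bar> \<le> c * (Nt t w)\<^sup>2"
  shows "integrable M f"
proof -
  define B where "B = 2 * (\<gamma> + 1 / ((1 + \<omega>) * (1 / \<tau> + 2 * \<mu>h)))"
  have bb: "\<bar>f w\<bar> \<le> c * B * Psi t w" for w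
  proof -
    have "c * (Nt t w)\<^sup>2 \<le> c * (B * Psi t w)" unfolding B_def using N2_Psi c0 by (intro mult_left_mono) auto
    then show ?thesis using b[of w] by simp
  qed
  have "integrable M (\<lambda>w. c * B * Psi t w)" using iP by simp
  then show ?thesis
    by (rule Bochner_Integration.integrable_bound[OF _ fm]) (auto intro!: AE_I2 order_trans[OF bb])
qed

lemma step_exp:
  assumes iP: "integrable M (Psi t)"
  shows "integrable M (Psi (Suc t)) \<and> (\<integral>w. Psi (Suc t) w \<partial>M) \<le> cc * (\<integral>w. Psi t w \<partial>M)"
proof -
  interpret S: sigma_finite_subalgebra M "FF t" by (rule FF_sfs)
  obtain L where L0: "L \<ge> 0" and Lb: "\<And>t w. norm (rr t w) \<le> L * Nt t w \<and> norm (adjoint K (rr t w)) \<le> L * Nt t w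
   \<and> norm (Xv t w) \<le> L * Nt t w \<and> norm (Bv t w) \<le> L * Nt t w \<and> norm (Yv t w) \<le> L * Nt t w"
    using bounds by blast
  have sq: "(norm v)\<^sup>2 \<le> L\<^sup>2 * (Nt t w)\<^sup>2" if "norm v \<le> L * Nt t w" for v :: "'a::real_normed_vector" and w
  proof -
    have "(norm v)\<^sup>2 \<le> (L * Nt t w)\<^sup>2" using that by (intro power_mono) auto
    then show ?thesis by (simp add: power_mult_distrib)
  qed
  have L20: "L\<^sup>2 \<ge> 0" by simp
  have i_R: "integrable M (\<lambda>w. (norm (rr t w))\<^sup>2)"
    by (rule int_from_N2[OF iP _ L20]) (use sq Lb in auto)
  have i_KR: "integrable M (\<lambda>w. (norm (adjoint K (rr t w)))\<^sup>2)"
    by (rule int_from_N2[OF iP _ L20]) (use sq Lb in auto)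
  have i_Y2: "integrable M (\<lambda>w. (norm (Yv t w))\<^sup>2)"
    by (rule int_from_N2[OF iP _ L20]) (use sq Lb in auto)
  define Cq where "Cq = (1 + \<omega>) * (1 / \<tau> + 2 * \<mu>h)"
  have Cq0: "Cq \<ge> 0" unfolding Cq_def using \<omega>_nn \<tau>_pos \<mu>h_pos by simp
  have i_Phi: "integrable M (Phi t)"
  proof (rule int_from_N2[OF iP Phi_meas, of "(1/\<gamma> + Cq) * L\<^sup>2"])
    show "0 \<le> (1/\<gamma> + Cq) * L\<^sup>2" using \<gamma>_pos Cq0 by simp
    fix w
    have "Phi t w \<ge> 0" unfolding Phi_def Cq_def[symmetric] using \<gamma>_pos Cq0 by simp
    moreover have "Phi t w \<le> (1/\<gamma>) * (L\<^sup>2 * (Nt t w)\<^sup>2) + Cq * (L\<^sup>2 * (Nt t w)\<^sup>2)"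
    proof -
      have "(norm (Xv t w))\<^sup>2 \<le> L\<^sup>2 * (Nt t w)\<^sup>2" "(norm (Bv t w))\<^sup>2 \<le> L\<^sup>2 * (Nt t w)\<^sup>2"
        using sq[of "Xv t w" w] sq[of "Bv t w" w] Lb[of t w] by auto
      then show ?thesis unfolding Phi_def Cq_def[symmetric] using \<gamma>_pos Cq0
        by (intro add_mono mult_left_mono) auto
    qed
    ultimately show "\<bar>Phi t w\<bar> \<le> (1/\<gamma> + Cq) * L\<^sup>2 * (Nt t w)\<^sup>2" by (simp add: algebra_simps)
  qed
  have i_wR: "integrable M (\<lambda>w. \<omega> * (norm (rr t w))\<^sup>2)" using i_R by simp
  have nnD: "(\<integral>\<^sup>+w. ennreal ((norm (dl t w))\<^sup>2) \<partial>M) \<le> ennreal (\<integral>w. \<omega> * (norm (rr t w))\<^sup>2 \<partial>M)"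
  proof -
    have "(\<integral>\<^sup>+w. ennreal ((norm (dl t w))\<^sup>2) \<partial>M) = (\<integral>\<^sup>+w. nn_cond_exp M (FF t) (\<lambda>w. ennreal ((norm (dl t w))\<^sup>2)) w \<partial>M)"
      using S.nn_cond_exp_intg[of "\<lambda>_. 1" "\<lambda>w. ennreal ((norm (dl t w))\<^sup>2)"] by simp
    also have "\<dots> \<le> (\<integral>\<^sup>+w. ennreal (\<omega> * (norm (rr t w))\<^sup>2) \<partial>M)"
      by (rule nn_integral_mono_AE) (use d_var[of t] in \<open>simp add: dl_def rr_def\<close>)
    also have "\<dots> = ennreal (\<integral>w. \<omega> * (norm (rr t w))\<^sup>2 \<partial>M)"
      by (rule nn_integral_eq_integral[OF i_wR]) (use \<omega>_nn in auto)
    finally show ?thesis .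
  qed
  have i_D2: "integrable M (\<lambda>w. (norm (dl t w))\<^sup>2)"
    by (rule integrableI_bounded) (use nnD in \<open>auto simp: top.not_eq_extremum intro: le_less_trans\<close>)
  have le_D: "(\<integral>w. (norm (dl t w))\<^sup>2 \<partial>M) \<le> (\<integral>w. \<omega> * (norm (rr t w))\<^sup>2 \<partial>M)"
  proof -
    have "ennreal (\<integral>w. (norm (dl t w))\<^sup>2 \<partial>M) = (\<integral>\<^sup>+w. ennreal ((norm (dl t w))\<^sup>2) \<partial>M)"
      by (rule nn_integral_eq_integral[OF i_D2, symmetric]) auto
    with nnD have "ennreal (\<integral>w. (norm (dl t w))\<^sup>2 \<partial>M) \<le> ennreal (\<integral>w. \<omega> * (norm (rr t w))\<^sup>2 \<partial>M)" by simp
    moreover have "(\<integral>w. \<omega> * (norm (rr t w))\<^sup>2 \<partial>M) \<ge> 0" using \<omega>_nn by (intro integral_nonneg_AE AE_I2) auto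
    ultimately show ?thesis by simp
  qed
  define Gk where "Gk w = \<omega>ran * (norm (rr t w))\<^sup>2 - \<zeta> * (norm (adjoint K (rr t w)))\<^sup>2" for w
  have i_Gk: "integrable M Gk" unfolding Gk_def[abs_def] using i_R i_KR by simp
  have aeK: "AE w in M. 0 \<le> Gk w \<and> nn_cond_exp M (FF t) (\<lambda>w. ennreal ((norm (adjoint K (dl t w)))\<^sup>2)) w \<le> ennreal (Gk w)"
    using d_var_K[of t] by (simp add: Let_def Gk_def dl_def rr_def)
  have nnKD: "(\<integral>\<^sup>+w. ennreal ((norm (adjoint K (dl t w)))\<^sup>2) \<partial>M) \<le> ennreal (\<integral>w. Gk w \<partial>M)"
  proof -
    have "(\<integral>\<^sup>+w. ennreal ((norm (adjoint K (dl t w)))\<^sup>2) \<partial>M) = (\<integral>\<^sup>+w. nn_cond_exp M (FF t) (\<lambda>w. ennreal ((norm (adjoint K (dl t w)))\<^sup>2)) w \<partial>M)"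
      using S.nn_cond_exp_intg[of "\<lambda>_. 1" "\<lambda>w. ennreal ((norm (adjoint K (dl t w)))\<^sup>2)"] by simp
    also have "\<dots> \<le> (\<integral>\<^sup>+w. ennreal (Gk w) \<partial>M)"
      by (rule nn_integral_mono_AE) (use aeK in auto)
    also have "\<dots> = ennreal (\<integral>w. Gk w \<partial>M)"
      by (rule nn_integral_eq_integral[OF i_Gk]) (use aeK in auto)
    finally show ?thesis .
  qed
  have i_KD2: "integrable M (\<lambda>w. (norm (adjoint K (dl t w)))\<^sup>2)"
    by (rule integrableI_bounded) (use nnKD in \<open>auto simp: top.not_eq_extremum intro: le_less_trans\<close>)
  have le_KD: "(\<integral>w. (norm (adjoint K (dl t w)))\<^sup>2 \<partial>M) \<le> (\<integral>w. Gk w \<partial>M)"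
  proof -
    have "ennreal (\<integral>w. (norm (adjoint K (dl t w)))\<^sup>2 \<partial>M) = (\<integral>\<^sup>+w. ennreal ((norm (adjoint K (dl t w)))\<^sup>2) \<partial>M)"
      by (rule nn_integral_eq_integral[OF i_KD2, symmetric]) auto
    with nnKD have "ennreal (\<integral>w. (norm (adjoint K (dl t w)))\<^sup>2 \<partial>M) \<le> ennreal (\<integral>w. Gk w \<partial>M)" by simp
    moreover have "(\<integral>w. Gk w \<partial>M) \<ge> 0" using aeK by (intro integral_nonneg_AE) auto
    ultimately show ?thesis by simp
  qed
  have i_G: "integrable M (\<lambda>w. (norm (Yv t w))\<^sup>2 + 2 * (norm (rr t w))\<^sup>2 + 2 * (norm (dl t w))\<^sup>2)"
    using i_Y2 i_R i_D2 by simp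
  have ab: "\<bar>inner Y b * inner b z\<bar> \<le> (norm Y)\<^sup>2 + (norm z)\<^sup>2" if b: "b \<in> Basis" for Y z :: 'u and b
  proof -
    have "\<bar>inner Y b * inner b z\<bar> = \<bar>inner Y b\<bar> * \<bar>inner b z\<bar>" by (simp add: abs_mult)
    also have "\<dots> \<le> norm Y * norm z"
    proof (rule mult_mono)
      show "\<bar>inner Y b\<bar> \<le> norm Y" using Basis_le_norm[OF b, of Y] by (simp add: inner_commute)
      show "\<bar>inner b z\<bar> \<le> norm z" using Basis_le_norm[OF b, of z] by (simp add: inner_commute)
    qed auto
    also have "\<dots> \<le> (norm Y)\<^sup>2 + (norm z)\<^sup>2"
    proof -
      have "2 * norm Y * norm z \<le> (norm Y)\<^sup>2 + (norm z)\<^sup>2" by (rule sum_squares_bound)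
      moreover have "norm Y * norm z \<ge> 0" by simp
      ultimately show ?thesis by linarith
    qed
    finally show ?thesis .
  qed
  have dnorm: "(norm (d t w))\<^sup>2 \<le> 2 * (norm (rr t w))\<^sup>2 + 2 * (norm (dl t w))\<^sup>2" for w
  proof -
    have "d t w = rr t w + dl t w" by (simp add: dl_def)
    then have "norm (d t w) \<le> norm (rr t w) + norm (dl t w)" by (metis norm_triangle_ineq)
    then have "(norm (d t w))\<^sup>2 \<le> (norm (rr t w) + norm (dl t w))\<^sup>2" by (intro power_mono) auto
    also have "\<dots> \<le> 2 * (norm (rr t w))\<^sup>2 + 2 * (norm (dl t w))\<^sup>2"
    proof -
      have "2 * norm (rr t w) * norm (dl t w) \<le> (norm (rr t w))\<^sup>2 + (norm (dl t w))\<^sup>2" by (rule sum_squares_bound)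
      then show ?thesis unfolding power2_sum by linarith
    qed
    finally show ?thesis .
  qed
  have i_fd: "integrable M (\<lambda>w. inner (Yv t w) b * inner b (d t w))" if b: "b \<in> Basis" for b
  proof (rule Bochner_Integration.integrable_bound[OF i_G])
    show "(\<lambda>w. inner (Yv t w) b * inner b (d t w)) \<in> borel_measurable M" using d_meas[of t] by measurable
    show "AE w in M. norm (inner (Yv t w) b * inner b (d t w))
        \<le> norm ((norm (Yv t w))\<^sup>2 + 2 * (norm (rr t w))\<^sup>2 + 2 * (norm (dl t w))\<^sup>2)"
    proof (rule AE_I2)
      fix w
      have "\<bar>inner (Yv t w) b * inner b (d t w)\<bar> \<le> (norm (Yv t w))\<^sup>2 + (norm (d t w))\<^sup>2" by (rule ab[OF b])
      also have "\<dots> \<le> (norm (Yv t w))\<^sup>2 + 2 * (norm (rr t w))\<^sup>2 + 2 * (norm (dl t w))\<^sup>2" using dnorm[of w] by simp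
      finally show "norm (inner (Yv t w) b * inner b (d t w))
        \<le> norm ((norm (Yv t w))\<^sup>2 + 2 * (norm (rr t w))\<^sup>2 + 2 * (norm (dl t w))\<^sup>2)" by simp
    qed
  qed
  have i_fr: "integrable M (\<lambda>w. inner (Yv t w) b * inner b (rr t w))" if b: "b \<in> Basis" for b
  proof (rule Bochner_Integration.integrable_bound[OF i_G])
    show "(\<lambda>w. inner (Yv t w) b * inner b (rr t w)) \<in> borel_measurable M" by measurable
    show "AE w in M. norm (inner (Yv t w) b * inner b (rr t w))
        \<le> norm ((norm (Yv t w))\<^sup>2 + 2 * (norm (rr t w))\<^sup>2 + 2 * (norm (dl t w))\<^sup>2)"
    proof (rule AE_I2)
      fix w
      have "\<bar>inner (Yv t w) b * inner b (rr t w)\<bar> \<le> (norm (Yv t w))\<^sup>2 + (norm (rr t w))\<^sup>2" by (rule ab[OF b])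
      also have "\<dots> \<le> (norm (Yv t w))\<^sup>2 + 2 * (norm (rr t w))\<^sup>2 + 2 * (norm (dl t w))\<^sup>2" by simp
      finally show "norm (inner (Yv t w) b * inner b (rr t w))
        \<le> norm ((norm (Yv t w))\<^sup>2 + 2 * (norm (rr t w))\<^sup>2 + 2 * (norm (dl t w))\<^sup>2)" by simp
    qed
  qed
  have zb: "(\<integral>w. inner (Yv t w) b * inner b (d t w) - inner (Yv t w) b * inner b (rr t w) \<partial>M) = 0"
    if b: "b \<in> Basis" for b
  proof -
    have fF: "(\<lambda>w. inner (Yv t w) b) \<in> borel_measurable (FF t)" by measurable
    have gM: "(\<lambda>w. inner b (d t w)) \<in> borel_measurable M" using d_meas[of t] by measurable
    have "(\<integral>w. inner (Yv t w) b * inner b (d t w) \<partial>M)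
        = (\<integral>w. inner (Yv t w) b * real_cond_exp M (FF t) (\<lambda>w. inner b (d t w)) w \<partial>M)"
      by (rule S.real_cond_exp_intg(2)[OF i_fd[OF b] fF gM, symmetric])
    also have "\<dots> = (\<integral>w. inner (Yv t w) b * inner b (rr t w) \<partial>M)"
    proof (rule integral_cong_AE)
      show "(\<lambda>w. inner (Yv t w) b * real_cond_exp M (FF t) (\<lambda>w. inner b (d t w)) w) \<in> borel_measurable M"
        by measurable
      show "(\<lambda>w. inner (Yv t w) b * inner b (rr t w)) \<in> borel_measurable M" by measurable
      show "AE w in M. inner (Yv t w) b * real_cond_exp M (FF t) (\<lambda>w. inner b (d t w)) w = inner (Yv t w) b * inner b (rr t w)"
        using d_unbiased[of t b] by eventually_elim (simp add: rr_def)
    qed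
    finally show ?thesis using i_fd[OF b] i_fr[OF b] by simp
  qed
  have cross_eq: "inner (Yv t w) (dl t w) = (\<Sum>b\<in>Basis. inner (Yv t w) b * inner b (d t w) - inner (Yv t w) b * inner b (rr t w))" for w
  proof -
    have "inner (Yv t w) (dl t w) = (\<Sum>b\<in>Basis. inner (Yv t w) b * inner (dl t w) b)" by (rule euclidean_inner)
    also have "\<dots> = (\<Sum>b\<in>Basis. inner (Yv t w) b * inner b (d t w) - inner (Yv t w) b * inner b (rr t w))"
      by (intro sum.cong refl) (simp add: dl_def inner_diff_left inner_diff_right inner_commute right_diff_distrib)
    finally show ?thesis .
  qed
  have i_cross: "integrable M (\<lambda>w. inner (Yv t w) (dl t w))"
    unfolding cross_eq using i_fd i_fr by (intro Bochner_Integration.integrable_sum Bochner_Integration.integrable_diff) auto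
  have cross0: "(\<integral>w. inner (Yv t w) (dl t w) \<partial>M) = 0"
    unfolding cross_eq using i_fd i_fr zb by (subst Bochner_Integration.integral_sum) auto
  define C' where "C' = (1 + \<omega>) * (1 / \<tau> + 2 * \<mu>h) / ((1 + \<omega>) * (1 + \<omega>))"
  have C'0: "C' \<ge> 0" unfolding C'_def using \<omega>_nn \<tau>_pos \<mu>h_pos by simp
  have Pe: "Psi (Suc t) = (\<lambda>w. (Phi t w + inner (Yv t w) (dl t w)) + (\<gamma> * (norm (adjoint K (dl t w)))\<^sup>2 + C' * (norm (dl t w))\<^sup>2))"
    by (rule ext) (simp add: decomp C'_def add.assoc)
  have i1: "integrable M (\<lambda>w. Phi t w + inner (Yv t w) (dl t w))" using i_Phi i_cross by simp
  have i2: "integrable M (\<lambda>w. \<gamma> * (norm (adjoint K (dl t w)))\<^sup>2 + C' * (norm (dl t w))\<^sup>2)" using i_KD2 i_D2 by simp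
  have iS: "integrable M (Psi (Suc t))" unfolding Pe using i1 i2 by simp
  have "(\<integral>w. Psi (Suc t) w \<partial>M) = ((\<integral>w. Phi t w \<partial>M) + (\<integral>w. inner (Yv t w) (dl t w) \<partial>M))
      + (\<gamma> * (\<integral>w. (norm (adjoint K (dl t w)))\<^sup>2 \<partial>M) + C' * (\<integral>w. (norm (dl t w))\<^sup>2 \<partial>M))"
    unfolding Pe using i_Phi i_cross i_KD2 i_D2 i1 i2 by simp
  also have "\<dots> \<le> ((\<integral>w. Phi t w \<partial>M) + 0) + (\<gamma> * (\<integral>w. Gk w \<partial>M) + C' * (\<integral>w. \<omega> * (norm (rr t w))\<^sup>2 \<partial>M))"
    unfolding cross0 using le_KD le_D \<gamma>_pos C'0 by (intro add_mono mult_left_mono) auto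
  also have "\<dots> = (\<integral>w. Phi t w + \<gamma> * Gk w + C' * (\<omega> * (norm (rr t w))\<^sup>2) \<partial>M)"
    using i_Phi i_Gk i_wR by simp
  also have "\<dots> \<le> (\<integral>w. cc * Psi t w \<partial>M)"
  proof (rule integral_mono)
    show "integrable M (\<lambda>w. Phi t w + \<gamma> * Gk w + C' * (\<omega> * (norm (rr t w))\<^sup>2))" using i_Phi i_Gk i_wR by simp
    show "integrable M (\<lambda>w. cc * Psi t w)" using iP by simp
    fix w show "Phi t w + \<gamma> * Gk w + C' * (\<omega> * (norm (rr t w))\<^sup>2) \<le> cc * Psi t w"
      using key_vec[of t w] unfolding Gk_def C'_def .
  qed
  also have "\<dots> = cc * (\<integral>w. Psi t w \<partial>M)" by simp
  finally show ?thesis using iS by simp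
qed

end

context rpcp
begin

lemma Psi_nn: "Psi t w \<ge> 0"
  unfolding Psi_def using \<gamma>_pos \<omega>_nn \<tau>_pos \<mu>h_pos by (intro add_nonneg_nonneg mult_nonneg_nonneg) auto

definition "Psi0 = 1 / \<gamma> * (norm (x0 - xs))\<^sup>2 + (1 + \<omega>) * (1 / \<tau> + 2 * \<mu>h) * (norm (u0 - us))\<^sup>2"

lemma Psi_0: "Psi 0 w = Psi0" unfolding Psi_def Psi0_def init ..

lemma cc_pos: "cc > 0"
proof -
  have "1 / (1 + \<gamma> * \<mu>g) > 0" using \<gamma>_pos \<mu>g_pos by (simp add: add_pos_pos)
  then show ?thesis unfolding cc_def by (simp add: less_max_iff_disj)
qed

lemma cc_lt1: "cc < 1"
proof -
  have gm: "\<gamma> * \<mu>g > 0" using \<gamma>_pos \<mu>g_pos by simp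
  have a: "1 / (1 + \<gamma> * \<mu>g) < 1" using gm by simp
  have tm: "\<tau> * \<mu>h > 0" using \<tau>_pos \<mu>h_pos by simp
  have "(1 + \<omega>) * (1 + 2 * \<tau> * \<mu>h) > 0" using \<omega>_nn tm by (intro mult_pos_pos) auto
  moreover have "2 * \<tau> * \<mu>h > 0" using \<tau>_pos \<mu>h_pos by simp
  ultimately have "2 * \<tau> * \<mu>h / ((1 + \<omega>) * (1 + 2 * \<tau> * \<mu>h)) > 0" by (rule divide_pos_pos[rotated])
  then have b: "1 - 2 * \<tau> * \<mu>h / ((1 + \<omega>) * (1 + 2 * \<tau> * \<mu>h)) < 1" by simp
  show ?thesis unfolding cc_def using a b by simp
qed

lemma cc_min: "cc = 1 - min (\<gamma> * \<mu>g / (1 + \<gamma> * \<mu>g)) (2 * \<tau> * \<mu>h / ((1 + \<omega>) * (1 + 2 * \<tau> * \<mu>h)))"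
proof -
  have gm: "1 + \<gamma> * \<mu>g > 0" using \<gamma>_pos \<mu>g_pos by (simp add: add_pos_pos)
  have "1 / (1 + \<gamma> * \<mu>g) = 1 - \<gamma> * \<mu>g / (1 + \<gamma> * \<mu>g)" using gm by (simp add: field_simps)
  then show ?thesis unfolding cc_def by (simp add: max_def min_def)
qed

lemma exp_bound: "integrable M (Psi t) \<and> (\<integral>w. Psi t w \<partial>M) \<le> cc ^ t * Psi0"
proof (induction t)
  case 0
  interpret prob_space M by (rule M)
  have e: "Psi 0 = (\<lambda>w. Psi0)" using Psi_0 by auto
  show ?case unfolding e by (simp add: prob_space)
next
  case (Suc t)
  have s: "integrable M (Psi (Suc t)) \<and> (\<integral>w. Psi (Suc t) w \<partial>M) \<le> cc * (\<integral>w. Psi t w \<partial>M)"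
    using step_exp Suc by blast
  have "cc * (\<integral>w. Psi t w \<partial>M) \<le> cc * (cc ^ t * Psi0)" using Suc cc_pos by (intro mult_left_mono) auto
  then show ?case using s by simp
qed

lemma nn_bound: "(\<integral>\<^sup>+ w. ennreal (Psi t w) \<partial>M) \<le> ennreal (cc ^ t * Psi0)"
proof -
  have "(\<integral>\<^sup>+ w. ennreal (Psi t w) \<partial>M) = ennreal (\<integral>w. Psi t w \<partial>M)"
    using exp_bound[of t] Psi_nn by (intro nn_integral_eq_integral) auto
  also have "\<dots> \<le> ennreal (cc ^ t * Psi0)" using exp_bound[of t] by (intro ennreal_leI) auto
  finally show ?thesis .
qed

lemma Psi0_nn: "Psi0 \<ge> 0" using Psi_nn[of 0] Psi_0 by simp

lemma AE_Psi_lim: "AE w in M. (\<lambda>t. Psi t w) \<longlonglongrightarrow> 0"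
proof -
  have sg: "summable (\<lambda>t. cc ^ t * Psi0)" using cc_pos cc_lt1 by (intro summable_mult2 summable_geometric) auto
  have "(\<integral>\<^sup>+ w. (\<Sum>t. ennreal (Psi t w)) \<partial>M) = (\<Sum>t. \<integral>\<^sup>+ w. ennreal (Psi t w) \<partial>M)"
    by (rule nn_integral_suminf) simp
  also have "\<dots> \<le> (\<Sum>t. ennreal (cc ^ t * Psi0))"
    by (intro suminf_le summableI nn_bound)
  also have "\<dots> = ennreal (\<Sum>t. cc ^ t * Psi0)"
    using sg cc_pos Psi0_nn by (intro suminf_ennreal2) auto
  finally have le: "(\<integral>\<^sup>+ w. (\<Sum>t. ennreal (Psi t w)) \<partial>M) \<le> ennreal (\<Sum>t. cc ^ t * Psi0)" .
  have fin: "(\<integral>\<^sup>+ w. (\<Sum>t. ennreal (Psi t w)) \<partial>M) \<noteq> \<infinity>"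
    using neq_top_trans[OF ennreal_neq_top le] by simp
  have ms: "(\<lambda>w. \<Sum>t. ennreal (Psi t w)) \<in> borel_measurable M" by measurable
  have "AE w in M. (\<Sum>t. ennreal (Psi t w)) \<noteq> \<infinity>"
    by (rule nn_integral_PInf_AE[OF ms fin])
  then show ?thesis
  proof (rule AE_mp, intro AE_I2 impI)
    fix w assume "(\<Sum>t. ennreal (Psi t w)) \<noteq> \<infinity>"
    then have "summable (\<lambda>t. Psi t w)" using Psi_nn by (intro summable_suminf_not_top) auto
    then show "(\<lambda>t. Psi t w) \<longlonglongrightarrow> 0" by (rule summable_LIMSEQ_zero)
  qed
qed

lemma e_bound: "norm (x t w - xs) \<le> sqrt (\<gamma> * Psi t w)"
proof -
  have C0: "(1 + \<omega>) * (1 / \<tau> + 2 * \<mu>h) * (norm (u t w - us))\<^sup>2 \<ge> 0" using \<omega>_nn \<tau>_pos \<mu>h_pos by simp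
  have "1 / \<gamma> * (norm (x t w - xs))\<^sup>2 \<le> Psi t w" unfolding Psi_def using C0 by simp
  then have "(norm (x t w - xs))\<^sup>2 \<le> \<gamma> * Psi t w" using \<gamma>_pos by (simp add: field_simps)
  then show ?thesis by (simp add: real_le_rsqrt)
qed

lemma a_bound: "norm (u t w - us) \<le> sqrt (Psi t w / ((1 + \<omega>) * (1 / \<tau> + 2 * \<mu>h)))"
proof -
  define C where "C = (1 + \<omega>) * (1 / \<tau> + 2 * \<mu>h)"
  have C0: "C > 0"
  proof -
    have "1 + \<omega> > 0" using \<omega>_nn by simp
    moreover have "1 / \<tau> + 2 * \<mu>h > 0" using \<tau>_pos \<mu>h_pos by (intro add_pos_pos) auto
    ultimately show ?thesis unfolding C_def by simp
  qed
  have "1 / \<gamma> * (norm (x t w - xs))\<^sup>2 \<ge> 0" using \<gamma>_pos by simp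
  then have "C * (norm (u t w - us))\<^sup>2 \<le> Psi t w" unfolding Psi_def C_def[symmetric] by simp
  then have "(norm (u t w - us))\<^sup>2 \<le> Psi t w / C" using C0 by (simp add: field_simps)
  then show ?thesis unfolding C_def[symmetric] by (simp add: real_le_rsqrt)
qed

lemma q_bound: "norm (xhat t w - xs) \<le> norm (x t w - xs) + \<gamma> * onorm K * norm (u t w - us)"
proof -
  have "norm (xhat t w - xs) \<le> norm ((x t w - \<gamma> *\<^sub>R adjoint K (u t w)) - (xs - \<gamma> *\<^sub>R adjoint K us))"
    using P_nonexp[of "x t w - \<gamma> *\<^sub>R adjoint K (u t w)" "xs - \<gamma> *\<^sub>R adjoint K us"]
    unfolding P_fix xhat_def[symmetric] .
  also have "(x t w - \<gamma> *\<^sub>R adjoint K (u t w)) - (xs - \<gamma> *\<^sub>R adjoint K us) = (x t w - xs) - \<gamma> *\<^sub>R adjoint K (u t w - us)"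
    by (simp add: linear_diff[OF adj_lin] algebra_simps)
  also have "norm \<dots> \<le> norm (x t w - xs) + \<gamma> * norm (adjoint K (u t w - us))"
    using norm_triangle_ineq4[of "x t w - xs" "\<gamma> *\<^sub>R adjoint K (u t w - us)"] \<gamma>_pos by simp
  also have "\<dots> \<le> norm (x t w - xs) + \<gamma> * (onorm K * norm (u t w - us))"
    using norm_adj \<gamma>_pos by (intro add_left_mono mult_left_mono) auto
  finally show ?thesis by (simp add: mult.assoc)
qed

lemma main:
  shows "let c = max (1 / (1 + \<gamma> * \<mu>g)) (1 - 2 * \<tau> * \<mu>h / ((1 + \<omega>) * (1 + 2 * \<tau> * \<mu>h)));
             \<Psi> = (\<lambda>t w. 1 / \<gamma> * (norm (x t w - xs))\<^sup>2
                       + (1 + \<omega>) * (1 / \<tau> + 2 * \<mu>h) * (norm (u t w - us))\<^sup>2)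
         in c = 1 - min (\<gamma> * \<mu>g / (1 + \<gamma> * \<mu>g)) (2 * \<tau> * \<mu>h / ((1 + \<omega>) * (1 + 2 * \<tau> * \<mu>h)))
            \<and> c < 1
            \<and> (\<forall>t. (\<integral>\<^sup>+ w. ennreal (\<Psi> t w) \<partial>M) \<le> ennreal (c ^ t * (1 / \<gamma> * (norm (x0 - xs))\<^sup>2
                       + (1 + \<omega>) * (1 / \<tau> + 2 * \<mu>h) * (norm (u0 - us))\<^sup>2)))
            \<and> (AE w in M. (\<lambda>t. x t w) \<longlonglongrightarrow> xs)
            \<and> (AE w in M. (\<lambda>t. xhat t w) \<longlonglongrightarrow> xs)
            \<and> (AE w in M. (\<lambda>t. u t w) \<longlonglongrightarrow> us)"
proof -
  have Ps: "(\<lambda>t w. 1 / \<gamma> * (norm (x t w - xs))\<^sup>2 + (1 + \<omega>) * (1 / \<tau> + 2 * \<mu>h) * (norm (u t w - us))\<^sup>2) = Psi"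
    unfolding Psi_def[abs_def] ..
  have c: "max (1 / (1 + \<gamma> * \<mu>g)) (1 - 2 * \<tau> * \<mu>h / ((1 + \<omega>) * (1 + 2 * \<tau> * \<mu>h))) = cc"
    unfolding cc_def ..
  have P0: "1 / \<gamma> * (norm (x0 - xs))\<^sup>2 + (1 + \<omega>) * (1 / \<tau> + 2 * \<mu>h) * (norm (u0 - us))\<^sup>2 = Psi0"
    unfolding Psi0_def ..
  define C where "C = (1 + \<omega>) * (1 / \<tau> + 2 * \<mu>h)"
  have lims: "AE w in M. (\<lambda>t. x t w) \<longlonglongrightarrow> xs \<and> (\<lambda>t. xhat t w) \<longlonglongrightarrow> xs \<and> (\<lambda>t. u t w) \<longlonglongrightarrow> us"
    using AE_Psi_lim
  proof (rule AE_mp, intro AE_I2 impI)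
    fix w assume L: "(\<lambda>t. Psi t w) \<longlonglongrightarrow> 0"
    have s1: "(\<lambda>t. sqrt (\<gamma> * Psi t w)) \<longlonglongrightarrow> 0"
      using tendsto_real_sqrt[OF tendsto_mult_right_zero[OF L, of \<gamma>]] by simp
    have s2: "(\<lambda>t. sqrt (Psi t w / C)) \<longlonglongrightarrow> 0"
      using tendsto_real_sqrt[OF tendsto_divide_zero[OF L, of C]] by simp
    have e0: "(\<lambda>t. x t w - xs) \<longlonglongrightarrow> 0"
      by (rule Lim_null_comparison[OF _ s1]) (use e_bound in auto)
    have a0: "(\<lambda>t. u t w - us) \<longlonglongrightarrow> 0"
      by (rule Lim_null_comparison[OF _ s2]) (use a_bound in \<open>auto simp: C_def\<close>)
    have n1: "(\<lambda>t. norm (x t w - xs) + \<gamma> * onorm K * norm (u t w - us)) \<longlonglongrightarrow> 0"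
      using tendsto_add[OF tendsto_norm_zero[OF e0] tendsto_mult_right_zero[OF tendsto_norm_zero[OF a0], of "\<gamma> * onorm K"]]
      by simp
    have q0: "(\<lambda>t. xhat t w - xs) \<longlonglongrightarrow> 0"
      by (rule Lim_null_comparison[OF _ n1]) (use q_bound in auto)
    show "(\<lambda>t. x t w) \<longlonglongrightarrow> xs \<and> (\<lambda>t. xhat t w) \<longlonglongrightarrow> xs \<and> (\<lambda>t. u t w) \<longlonglongrightarrow> us"
      using e0 a0 q0 by (auto intro: LIM_zero_cancel)
  qed
  have l1: "AE w in M. (\<lambda>t. x t w) \<longlonglongrightarrow> xs" using lims by (rule eventually_mono) auto
  have l2: "AE w in M. (\<lambda>t. xhat t w) \<longlonglongrightarrow> xs" using lims by (rule eventually_mono) auto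
  have l3: "AE w in M. (\<lambda>t. u t w) \<longlonglongrightarrow> us" using lims by (rule eventually_mono) auto
  have cm: "cc = 1 - min (\<gamma> * \<mu>g / (1 + \<gamma> * \<mu>g)) (2 * \<tau> * \<mu>h / ((1 + \<omega>) * (1 + 2 * \<tau> * \<mu>h)))"
    by (rule cc_min)
  have nb: "\<forall>t. (\<integral>\<^sup>+ w. ennreal (Psi t w) \<partial>M) \<le> ennreal (cc ^ t * Psi0)" using nn_bound by blast
  show ?thesis
    apply (simp only: Let_def)
    apply (simp only: Psi_def[symmetric] cc_def[symmetric] Psi0_def[symmetric])
    apply (intro conjI)
         apply (rule cm)
        apply (rule cc_lt1)
       apply (rule nb)
      apply (rule l1)
     apply (rule l2)
    apply (rule l3)
    done
qed

end

theorem theorem7: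
  fixes M :: "'w measure"
    and K :: "'x::euclidean_space \<Rightarrow> 'u::euclidean_space"
    and g :: "'x \<Rightarrow> ereal" and h :: "'u \<Rightarrow> ereal"
    and \<mu>g \<mu>h \<gamma> \<tau> \<omega> \<omega>ran \<zeta> :: real
    and x0 :: 'x and u0 :: 'u
    and x xhat :: "nat \<Rightarrow> 'w \<Rightarrow> 'x" and u d :: "nat \<Rightarrow> 'w \<Rightarrow> 'u"
    and xs :: 'x and us :: 'u
  assumes M: "prob_space M"
    and K_lin: "linear K" and K_nz: "K \<noteq> (\<lambda>_. 0)"
    and g_pcc: "proper_fun g" "closed_fun g" "convex_fun g"
    and h_pcc: "proper_fun h" "closed_fun h" "convex_fun h"
    and g_sc: "strongly_convex \<mu>g g" and h_sc: "strongly_convex \<mu>h (conj_fun h)"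
    and saddle_exists: "\<exists>xa ua. - adjoint K ua \<in> subdiff g xa \<and> K xa \<in> subdiff (conj_fun h) ua"
    and xs_primal: "\<forall>y. g xs + h (K xs) \<le> g y + h (K y)"
    and us_dual: "\<forall>v. conj_fun g (- adjoint K us) + conj_fun h us
                       \<le> conj_fun g (- adjoint K v) + conj_fun h v"
    and \<mu>g_pos: "\<mu>g > 0" and \<mu>h_pos: "\<mu>h > 0"
    and \<gamma>_pos: "\<gamma> > 0" and \<tau>_pos: "\<tau> > 0" and \<omega>_nn: "\<omega> \<ge> 0"
    and \<omega>ran_nn: "\<omega>ran \<ge> 0" and \<zeta>_range: "0 \<le> \<zeta>" "\<zeta> \<le> 1"
    and step: "\<gamma> * \<tau> * ((1 - \<zeta>) * (onorm K)\<^sup>2 + \<omega>ran) \<le> 1"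
    and init: "\<And>w. x 0 w = x0" "\<And>w. u 0 w = u0"
    and xhat_def: "\<And>t w. xhat t w = prox \<gamma> g (x t w - \<gamma> *\<^sub>R adjoint K (u t w))"
    and u_rec: "\<And>t w. u (Suc t) w = u t w + (1 / (1 + \<omega>)) *\<^sub>R d t w"
    and x_rec: "\<And>t w. x (Suc t) w = xhat t w - \<gamma> *\<^sub>R adjoint K (d t w)"
    and d_meas: "\<And>t. d t \<in> borel_measurable M"
    and d_int: "\<And>t. integrable M (d t)"
    and d_unbiased: "\<And>t v. AE w in M.
          real_cond_exp M (gen_filtration M x u t) (\<lambda>w. inner v (d t w)) w
          = inner v (prox \<tau> (conj_fun h) (u t w + \<tau> *\<^sub>R K (xhat t w)) - u t w)"
    and d_var: "\<And>t. AE w in M.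
          nn_cond_exp M (gen_filtration M x u t)
            (\<lambda>w. ennreal ((norm (d t w - (prox \<tau> (conj_fun h) (u t w + \<tau> *\<^sub>R K (xhat t w)) - u t w)))\<^sup>2)) w
          \<le> ennreal (\<omega> * (norm (prox \<tau> (conj_fun h) (u t w + \<tau> *\<^sub>R K (xhat t w)) - u t w))\<^sup>2)"
    and d_var_K: "\<And>t. AE w in M.
          (let r = prox \<tau> (conj_fun h) (u t w + \<tau> *\<^sub>R K (xhat t w)) - u t w in
           0 \<le> \<omega>ran * (norm r)\<^sup>2 - \<zeta> * (norm (adjoint K r))\<^sup>2 \<and>
           nn_cond_exp M (gen_filtration M x u t)
             (\<lambda>w'. ennreal ((norm (adjoint K (d t w' -
                (prox \<tau> (conj_fun h) (u t w' + \<tau> *\<^sub>R K (xhat t w')) - u t w'))))\<^sup>2)) w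
           \<le> ennreal (\<omega>ran * (norm r)\<^sup>2 - \<zeta> * (norm (adjoint K r))\<^sup>2))"
  shows "let c = max (1 / (1 + \<gamma> * \<mu>g)) (1 - 2 * \<tau> * \<mu>h / ((1 + \<omega>) * (1 + 2 * \<tau> * \<mu>h)));
             \<Psi> = (\<lambda>t w. 1 / \<gamma> * (norm (x t w - xs))\<^sup>2
                       + (1 + \<omega>) * (1 / \<tau> + 2 * \<mu>h) * (norm (u t w - us))\<^sup>2)
         in c = 1 - min (\<gamma> * \<mu>g / (1 + \<gamma> * \<mu>g)) (2 * \<tau> * \<mu>h / ((1 + \<omega>) * (1 + 2 * \<tau> * \<mu>h)))
            \<and> c < 1
            \<and> (\<forall>t. (\<integral>\<^sup>+ w. ennreal (\<Psi> t w) \<partial>M) \<le> ennreal (c ^ t * (1 / \<gamma> * (norm (x0 - xs))\<^sup>2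
                       + (1 + \<omega>) * (1 / \<tau> + 2 * \<mu>h) * (norm (u0 - us))\<^sup>2)))
            \<and> (AE w in M. (\<lambda>t. x t w) \<longlonglongrightarrow> xs)
            \<and> (AE w in M. (\<lambda>t. xhat t w) \<longlonglongrightarrow> xs)
            \<and> (AE w in M. (\<lambda>t. u t w) \<longlonglongrightarrow> us)"
proof -
  interpret R: rpcp M K g h \<mu>g \<mu>h \<gamma> \<tau> \<omega> \<omega>ran \<zeta> x0 u0 x xhat u d xs us
    by (rule rpcp.intro) (rule assms)+
  show ?thesis by (rule R.main)
qed

end
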